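(* Let $\phi$ be a skew-symmetric super-biderivation of $H=H(m,n;\underline t)$. Let $i\in Y$, and let $\alpha,u$ be such that $D_H(x^{(\alpha)}x^u)\in H$. Then $\phi(D_H(x_ix_{i'}),D_H(x^{(\alpha)}x^u))\in H_{(\alpha+\langle u\rangle)}$.
   Context: Setting for $H$: $\mathbb{F}$ is algebraically closed of characteristic $p>2$; $m=2k$ and $n=2t$ are even integers with $m,n\ge 2$; $s=m+n$; $Y_0=\{1,\dots,m\}$, $Y_1=\{m+1,\dots,s\}$, $Y=Y_0\cup Y_1$. Fix positive integers $\underline{t}=(t_1,\dots,t_m)$, $\pi_i=p^{t_i}-1$. $\Lambda(m,n;\underline{t})$ is the associative superalgebra with basis $x^{(\alpha)}x^u$ ($\alpha\in\mathbb{N}^m$, $0\le\alpha_i\le\pi_i$; $u=\langle i_1<\dots<i_r\rangle\subseteq Y_1$, $x^u=x_{i_1}\cdots x_{i_r}$, $x^\varnothing=1$), with $x^{(\alpha)}x^{(\beta)}=\binom{\alpha+\beta}{\alpha}x^{(\alpha+\beta)}$, $x_ix_j=-x_jx_i$ ($i,j\in Y_1$), $x^{(\alpha)}x_j=x_jx^{(\alpha)}$; parity of $x^{(\alpha)}x^u$ is $|u|\bmod 2$; $x_i=x^{(\varepsilon_i)}$ for $i\in Y_0$. $D_i(x^{(\alpha)}x^u)=x^{(\alpha-\varepsilon_i)}x^u$ (zero if $\alpha_i=0$) for $i\in Y_0$, $D_i(x^{(\alpha)}x^u)=x^{(\alpha)}\partial_i(x^u)$ for $i\in Y_1$ ($\partial_i$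 the Grassmann partial derivative); parity $\tau(i)=\bar0$ ($i\in Y_0$), $\bar1$ ($i\in Y_1$). $W(m,n;\underline t)=\{\sum f_iD_i\}$ with bracket $[fD_i,gD_j]=fD_i(g)D_j-(-1)^{\mathrm{d}(fD_i)\mathrm{d}(gD_j)}gD_j(f)D_i$. Set $i'=i+k$ ($1\le i\le k$), $i-k$ ($k<i\le 2k$), $i+t$ ($2k<i\le 2k+t$), $i-t$ ($2k+t<i\le s$); $\sigma(i)=1$ ($1\le i\le k$), $-1$ ($k<i\le2k$), $1$ ($2k<i\le s$). $D_H(f)=\sum_{i\in Y}\sigma(i')(-1)^{\tau(i')\mathrm{d}(f)}D_{i'}(f)D_i$ for homogeneous $f$. $\overline{H}=\mathrm{span}\{D_H(f)\}$, $H=[\overline H,\overline H]$, a finite-dimensional simple Lie superalgebra. Weight spaces: $T_H=\mathrm{span}\{D_H(x_lx_{l'}):l\in Y\}$ is an abelian subalgebra of $H$, and each $D_H(x^{(\alpha)}x^u)$ is a common eigenvector: $[D_H(x_lx_{l'}),D_H(x^{(\alpha)}x^u)]=\sigma(l)(\alpha_{l'}-\alpha_l+\delta_{(l'\in u)}-\delta_{(l\in u)})D_H(x^{(\alpha)}x^u)$ for all $l\in Y$ (with $\alpha_l:=0$ for $l\in Y_1$ and $\delta_{(P)}=1$ if $P$ is true, $0$ otherwise). $H_{(\alpha+\langle u\rangle)}$ denotes the set of $h\in H$ with $[D_H(x_lx_{l'}),h]=\sigma(l)(\alpha_{l'}-\alpha_l+\delta_{(l'\in u)}-\delta_{(l\in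 u)})h$ for all $l\in Y$. A skew-symmetric super-biderivation of a Lie superalgebra $L$ is a bilinear map $\phi:L\times L\to L$, $\mathbb{Z}_2$-homogeneous of degree $\mathrm{d}(\phi)$ (i.e. $\phi(L_\alpha,L_\beta)\subseteq L_{\alpha+\beta+\mathrm{d}(\phi)}$), with $\phi(x,[y,z])=[\phi(x,y),z]+(-1)^{(\mathrm{d}(\phi)+\mathrm{d}(x))\mathrm{d}(y)}[y,\phi(x,z)]$ and $\phi(x,y)=-(-1)^{\mathrm{d}(\phi)\mathrm{d}(x)+\mathrm{d}(\phi)\mathrm{d}(y)+\mathrm{d}(x)\mathrm{d}(y)}\phi(y,x)$ for homogeneous $x,y,z$. *)

theory Defs
  imports "HOL-Computational_Algebra.Polynomial" "HOL-Library.Function_Algebras"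
begin

text \<open>A basis monomial x^(alpha) x^u of Lambda(m,n;t) is indexed by a pair (alpha,u) with
  alpha :: nat => nat (zero outside Y0) and u a subset of Y1.  An element of Lambda is a
  coefficient function on such indices; an element sum_i f_i D_i of W is a function
  giving for each i the coefficient f_i in Lambda.\<close>

type_synonym idx = "(nat \<Rightarrow> nat) \<times> nat set"
type_synonym 'a lam = "idx \<Rightarrow> 'a"
type_synonym 'a witt = "nat \<Rightarrow> 'a lam"

definition Y0 :: "nat \<Rightarrow> nat set" where "Y0 m = {1..m}"
definition Y1 :: "nat \<Rightarrow> nat \<Rightarrow> nat set" where "Y1 m n = {m+1..m+n}"
definition Y :: "nat \<Rightarrow> nat \<Rightarrow> nat set" where "Y m n = {1..m+n}"

definition piv :: "'a::field itself \<Rightarrow> (nat \<Rightarrow> nat) \<Rightarrow> nat \<Rightarrow> nat" where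
  "piv T tt i = CHAR('a) ^ tt i - 1"

definition valid_idx :: "'a::field itself \<Rightarrow> nat \<Rightarrow> nat \<Rightarrow> (nat \<Rightarrow> nat) \<Rightarrow> idx \<Rightarrow> bool" where
  "valid_idx T m n tt a \<longleftrightarrow>
     (\<forall>j. j \<notin> Y0 m \<longrightarrow> fst a j = 0) \<and> (\<forall>j\<in>Y0 m. fst a j \<le> piv T tt j) \<and> snd a \<subseteq> Y1 m n"

definition Vset :: "'a::field itself \<Rightarrow> nat \<Rightarrow> nat \<Rightarrow> (nat \<Rightarrow> nat) \<Rightarrow> idx set" where
  "Vset T m n tt = {a. valid_idx T m n tt a}"

definition Lam :: "nat \<Rightarrow> nat \<Rightarrow> (nat \<Rightarrow> nat) \<Rightarrow> ('a::field) lam set" where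
  "Lam m n tt = {f. \<forall>a. \<not> valid_idx TYPE('a) m n tt a \<longrightarrow> f a = 0}"

definition ebas :: "idx \<Rightarrow> ('a::field) lam" where
  "ebas a = (\<lambda>c. if c = a then 1 else 0)"

definition lsmult :: "'a::field \<Rightarrow> 'a lam \<Rightarrow> 'a lam" where
  "lsmult c f = (\<lambda>a. c * f a)"

definition wsmult :: "'a::field \<Rightarrow> 'a witt \<Rightarrow> 'a witt" (infixr "\<cdot>w" 75) where
  "wsmult c w = (\<lambda>i a. c * w i a)"

text \<open>product of basis monomials:
  x^(alpha) x^u * x^(beta) x^v = binom(alpha+beta, alpha) * sign * x^(alpha+beta) x^(u Un v)\<close>
definition bmult :: "nat \<Rightarrow> nat \<Rightarrow> (nat \<Rightarrow> nat) \<Rightarrow> idx \<Rightarrow> idx \<Rightarrow> ('a::field) lam" where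
  "bmult m n tt a b =
     (let al = fst a; u = snd a; be = fst b; v = snd b; c = (\<lambda>j. al j + be j, u \<union> v) in
      if u \<inter> v = {} \<and> valid_idx TYPE('a) m n tt c then
        lsmult ((\<Prod>j\<in>Y0 m. of_nat ((al j + be j) choose al j))
                * (-1) ^ card {(i,j). i \<in> u \<and> j \<in> v \<and> j < i}) (ebas c)
      else 0)"

definition Lmult :: "nat \<Rightarrow> nat \<Rightarrow> (nat \<Rightarrow> nat) \<Rightarrow> ('a::field) lam \<Rightarrow> 'a lam \<Rightarrow> 'a lam" where
  "Lmult m n tt f g = (\<lambda>c. \<Sum>a\<in>Vset TYPE('a) m n tt. \<Sum>b\<in>Vset TYPE('a) m n tt.
                          f a * g b * bmult m n tt a b c)"

definition xg :: "nat \<Rightarrow> nat \<Rightarrow> ('a::field) lam" where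
  "xg m i = (if i \<in> Y0 m then ebas ((\<lambda>j. 0)(i := 1), {}) else ebas (\<lambda>j. 0, {i}))"

text \<open>D_i on basis monomials (Grassmann partial derivative for odd i)\<close>
definition Dbas :: "nat \<Rightarrow> nat \<Rightarrow> idx \<Rightarrow> ('a::field) lam" where
  "Dbas m i a =
     (if i \<in> Y0 m then (if fst a i = 0 then 0 else ebas ((fst a)(i := fst a i - 1), snd a))
      else if i \<in> snd a then lsmult ((-1) ^ card {j \<in> snd a. j < i}) (ebas (fst a, snd a - {i}))
      else 0)"

definition Dop :: "nat \<Rightarrow> nat \<Rightarrow> (nat \<Rightarrow> nat) \<Rightarrow> nat \<Rightarrow> ('a::field) lam \<Rightarrow> 'a lam" where
  "Dop m n tt i f = (\<lambda>c. \<Sum>a\<in>Vset TYPE('a) m n tt. f a * Dbas m i a c)"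

definition tau :: "nat \<Rightarrow> nat \<Rightarrow> nat" where
  "tau m i = (if i \<in> Y0 m then 0 else 1)"

definition bbr :: "nat \<Rightarrow> nat \<Rightarrow> (nat \<Rightarrow> nat) \<Rightarrow> nat \<Rightarrow> idx \<Rightarrow> nat \<Rightarrow> idx \<Rightarrow> ('a::field) witt" where
  "bbr m n tt i a j b =
     (\<lambda>l. (if l = j then Lmult m n tt (ebas a) (Dbas m i b) else 0)
          - (if l = i then lsmult ((-1) ^ ((card (snd a) + tau m i) * (card (snd b) + tau m j)))
                                  (Lmult m n tt (ebas b) (Dbas m j a)) else 0))"

definition Wbr :: "nat \<Rightarrow> nat \<Rightarrow> (nat \<Rightarrow> nat) \<Rightarrow> ('a::field) witt \<Rightarrow> 'a witt \<Rightarrow> 'a witt" where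
  "Wbr m n tt w z = (\<Sum>i\<in>Y m n. \<Sum>a\<in>Vset TYPE('a) m n tt. \<Sum>j\<in>Y m n. \<Sum>b\<in>Vset TYPE('a) m n tt.
                        (w i a * z j b) \<cdot>w bbr m n tt i a j b)"

definition pr :: "nat \<Rightarrow> nat \<Rightarrow> nat \<Rightarrow> nat" where
  "pr m n i = (let k = m div 2; t = n div 2 in
     if i \<le> k then i + k else if i \<le> 2*k then i - k else if i \<le> 2*k + t then i + t else i - t)"

definition sig :: "nat \<Rightarrow> nat \<Rightarrow> int" where
  "sig m i = (let k = m div 2 in if i \<le> k then 1 else if i \<le> 2*k then -1 else 1)"

definition dL :: "('a::field) lam \<Rightarrow> nat" where
  "dL f = (if \<exists>a. f a \<noteq> 0 \<and> odd (card (snd a)) then 1 else 0)"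

definition homogL :: "('a::field) lam \<Rightarrow> bool" where
  "homogL f \<longleftrightarrow> (\<exists>b. \<forall>a. f a \<noteq> 0 \<longrightarrow> card (snd a) mod 2 = b)"

definition DH :: "nat \<Rightarrow> nat \<Rightarrow> (nat \<Rightarrow> nat) \<Rightarrow> ('a::field) lam \<Rightarrow> 'a witt" where
  "DH m n tt f = (\<lambda>i. if i \<in> Y m n then
        lsmult (of_int (sig m (pr m n i)) * (-1) ^ (tau m (pr m n i) * dL f)) (Dop m n tt (pr m n i) f)
      else 0)"

definition lspan :: "('a::field) witt set \<Rightarrow> 'a witt set" where
  "lspan S = {w. \<exists>F c. finite F \<and> F \<subseteq> S \<and> w = (\<Sum>v\<in>F. c v \<cdot>w v)}"

definition Hbar :: "nat \<Rightarrow> nat \<Rightarrow> (nat \<Rightarrow> nat) \<Rightarrow> ('a::field) witt set" where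
  "Hbar m n tt = lspan {DH m n tt f | f. f \<in> Lam m n tt \<and> homogL f}"

definition Hset :: "nat \<Rightarrow> nat \<Rightarrow> (nat \<Rightarrow> nat) \<Rightarrow> ('a::field) witt set" where
  "Hset m n tt = lspan {Wbr m n tt x y | x y. x \<in> Hbar m n tt \<and> y \<in> Hbar m n tt}"

text \<open>Z_2-homogeneous components (parity of f D_i is d(f) + tau(i))\<close>
definition Wpar :: "nat \<Rightarrow> nat \<Rightarrow> ('a::field) witt set" where
  "Wpar m b = {w. \<forall>i a. w i a \<noteq> 0 \<longrightarrow> (card (snd a) + tau m i) mod 2 = b}"

definition Hpar :: "nat \<Rightarrow> nat \<Rightarrow> (nat \<Rightarrow> nat) \<Rightarrow> nat \<Rightarrow> ('a::field) witt set" where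
  "Hpar m n tt b = Hset m n tt \<inter> Wpar m b"

definition super_biderivation ::
  "nat \<Rightarrow> nat \<Rightarrow> (nat \<Rightarrow> nat) \<Rightarrow> nat \<Rightarrow> (('a::field) witt \<Rightarrow> 'a witt \<Rightarrow> 'a witt) \<Rightarrow> bool" where
  "super_biderivation m n tt d \<phi> \<longleftrightarrow>
     d < 2 \<and>
     (\<forall>x\<in>Hset m n tt. \<forall>y\<in>Hset m n tt. \<phi> x y \<in> Hset m n tt) \<and>
     (\<forall>x\<in>Hset m n tt. \<forall>y\<in>Hset m n tt. \<forall>z\<in>Hset m n tt.
         \<phi> (x + y) z = \<phi> x z + \<phi> y z \<and> \<phi> z (x + y) = \<phi> z x + \<phi> z y) \<and>
     (\<forall>c. \<forall>x\<in>Hset m n tt. \<forall>y\<in>Hset m n tt.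
         \<phi> (c \<cdot>w x) y = c \<cdot>w \<phi> x y \<and> \<phi> x (c \<cdot>w y) = c \<cdot>w \<phi> x y) \<and>
     (\<forall>a b. a < 2 \<longrightarrow> b < 2 \<longrightarrow> (\<forall>x\<in>Hpar m n tt a. \<forall>y\<in>Hpar m n tt b.
         \<phi> x y \<in> Hpar m n tt ((a + b + d) mod 2))) \<and>
     (\<forall>a b c. a < 2 \<longrightarrow> b < 2 \<longrightarrow> c < 2 \<longrightarrow>
        (\<forall>x\<in>Hpar m n tt a. \<forall>y\<in>Hpar m n tt b. \<forall>z\<in>Hpar m n tt c.
          \<phi> x (Wbr m n tt y z) = Wbr m n tt (\<phi> x y) z + ((-1) ^ ((d + a) * b)) \<cdot>w Wbr m n tt y (\<phi> x z))) \<and>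
     (\<forall>a b. a < 2 \<longrightarrow> b < 2 \<longrightarrow> (\<forall>x\<in>Hpar m n tt a. \<forall>y\<in>Hpar m n tt b.
          \<phi> x y = - (((-1) ^ (d * a + d * b + a * b)) \<cdot>w \<phi> y x)))"

text \<open>the weight space H_(alpha + <u>) (alpha_l = 0 for l in Y1 automatically)\<close>
definition weight_space :: "nat \<Rightarrow> nat \<Rightarrow> (nat \<Rightarrow> nat) \<Rightarrow> (nat \<Rightarrow> nat) \<Rightarrow> nat set \<Rightarrow> ('a::field) witt set" where
  "weight_space m n tt al u = {h \<in> Hset m n tt. \<forall>l\<in>Y m n.
     Wbr m n tt (DH m n tt (Lmult m n tt (xg m l) (xg m (pr m n l)))) h =
       of_int (sig m l * (int (al (pr m n l)) - int (al l)
                 + (if pr m n l \<in> u then 1 else 0) - (if l \<in> u then 1 else 0))) \<cdot>w h}"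

end

theory Submission
  imports Defs
begin


lemma pr_facts:
  assumes "even m" "even n" "i \<in> Y m n"
  shows "pr m n i \<in> Y m n" "pr m n (pr m n i) = i" "pr m n i \<noteq> i"
    "(pr m n i \<in> Y0 m) = (i \<in> Y0 m)"
    "i \<in> Y0 m \<Longrightarrow> sig m (pr m n i) = - sig m i"
    "i \<notin> Y0 m \<Longrightarrow> sig m i = 1"
    "sig m i = 1 \<or> sig m i = -1"
proof -
  obtain k t where mk: "m = 2*k" and nt: "n = 2*t" using assms by (auto elim!: evenE)
  have i: "1 \<le> i" "i \<le> 2*k+2*t" using assms(3) by (auto simp: Y_def mk nt)
  show "pr m n i \<in> Y m n" "pr m n (pr m n i) = i" "pr m n i \<noteq> i"
    "(pr m n i \<in> Y0 m) = (i \<in> Y0 m)"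
    "i \<in> Y0 m \<Longrightarrow> sig m (pr m n i) = - sig m i"
    "i \<notin> Y0 m \<Longrightarrow> sig m i = 1"
    "sig m i = 1 \<or> sig m i = -1"
    using i by (auto simp: pr_def sig_def Y_def Y0_def mk nt Let_def)
qed

lemma finite_Vset: "finite (Vset T m n tt)"
proof -
  let ?K = "Max ((\<lambda>j. piv T tt j) ` Y0 m)"
  have "Vset T m n tt \<subseteq> {f. \<forall>x. (x \<in> Y0 m \<longrightarrow> f x \<in> {0..?K}) \<and> (x \<notin> Y0 m \<longrightarrow> f x = 0)} \<times> Pow (Y1 m n)"
  proof
    fix a assume "a \<in> Vset T m n tt"
    then have v: "valid_idx T m n tt a" by (simp add: Vset_def)
    have "\<forall>x. (x \<in> Y0 m \<longrightarrow> fst a x \<in> {0..?K})"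
    proof (intro allI impI)
      fix x assume x: "x \<in> Y0 m"
      have "fst a x \<le> piv T tt x" using v x by (simp add: valid_idx_def)
      also have "\<dots> \<le> ?K" using x by (intro Max_ge) (auto simp: Y0_def)
      finally show "fst a x \<in> {0..?K}" by simp
    qed
    then show "a \<in> {f. \<forall>x. (x \<in> Y0 m \<longrightarrow> f x \<in> {0..?K}) \<and> (x \<notin> Y0 m \<longrightarrow> f x = 0)} \<times> Pow (Y1 m n)"
      using v by (cases a) (auto simp: valid_idx_def)
  qed
  moreover have "finite ({f. \<forall>x. (x \<in> Y0 m \<longrightarrow> f x \<in> {0..?K}) \<and> (x \<notin> Y0 m \<longrightarrow> f x = 0)} \<times> Pow (Y1 m n))"
    by (intro finite_cartesian_product finite_set_of_finite_funs) (auto simp: Y0_def Y1_def)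
  ultimately show ?thesis by (rule finite_subset)
qed



lemma ebas_mult_sum:
  assumes "finite S"
  shows "(\<Sum>a'\<in>S. (ebas a a' :: 'a::field) * F a') = (if a \<in> S then F a else 0)"
proof -
  have "(\<Sum>a'\<in>S. (ebas a a' :: 'a) * F a') = (\<Sum>a'\<in>S. if a = a' then F a' else 0)"
    by (intro sum.cong) (auto simp: ebas_def)
  then show ?thesis using assms by (simp add: sum.delta)
qed

lemma Lmult_ebas_left:
  assumes "a \<in> Vset TYPE('a::field) m n tt"
  shows "(Lmult m n tt (ebas a) g c :: 'a) = (\<Sum>b\<in>Vset TYPE('a) m n tt. g b * bmult m n tt a b c)"
proof -
  have "(Lmult m n tt (ebas a) g c :: 'a) =
     (\<Sum>a'\<in>Vset TYPE('a) m n tt. ebas a a' * (\<Sum>b\<in>Vset TYPE('a) m n tt. g b * bmult m n tt a' b c))"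
    unfolding Lmult_def by (simp add: sum_distrib_left mult.assoc)
  also have "\<dots> = (\<Sum>b\<in>Vset TYPE('a) m n tt. g b * bmult m n tt a b c)"
    using assms finite_Vset by (subst ebas_mult_sum) auto
  finally show ?thesis .
qed

lemma Dop_ebas:
  assumes "a \<in> Vset TYPE('a::field) m n tt"
  shows "(Dop m n tt j (ebas a) :: 'a lam) = Dbas m j a"
proof
  fix c
  show "Dop m n tt j (ebas a) c = (Dbas m j a c :: 'a)"
    unfolding Dop_def using assms finite_Vset by (subst ebas_mult_sum) auto
qed

lemma Dop_lsmult: "(Dop m n tt j (lsmult c f) :: 'a::field lam) = lsmult c (Dop m n tt j f)"
  unfolding Dop_def lsmult_def by (auto simp: sum_distrib_left mult.assoc)

lemma Dop_zero: "(Dop m n tt j 0 :: 'a::field lam) = 0"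
  unfolding Dop_def by (auto simp: fun_eq_iff)

lemma bmult_nz:
  assumes "(bmult m n tt a b c :: 'a::field) \<noteq> 0"
  shows "c = (\<lambda>j. fst a j + fst b j, snd a \<union> snd b)" "snd a \<inter> snd b = {}"
     "valid_idx TYPE('a) m n tt c"
  using assms by (auto simp: bmult_def Let_def lsmult_def ebas_def split: if_splits)

lemma Dbas_nz:
  assumes "(Dbas m j a c :: 'a::field) \<noteq> 0"
  shows "(j \<in> Y0 m \<and> fst a j \<noteq> 0 \<and> c = ((fst a)(j := fst a j - 1), snd a)) \<or>
         (j \<notin> Y0 m \<and> j \<in> snd a \<and> c = (fst a, snd a - {j}))"
  using assms by (auto simp: Dbas_def lsmult_def ebas_def split: if_splits)

definition Nc :: "nat \<Rightarrow> idx \<Rightarrow> nat" where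
  "Nc t x = fst x t + (if t \<in> snd x then 1 else 0)"

lemma Nc_bmult:
  assumes "(bmult m n tt a b c :: 'a::field) \<noteq> 0"
  shows "Nc t c = Nc t a + Nc t b"
  using bmult_nz[OF assms] by (auto simp: Nc_def)

lemma Nc_Dbas:
  assumes "(Dbas m j a c :: 'a::field) \<noteq> 0"
  shows "int (Nc t c) = int (Nc t a) - (if t = j then 1 else 0)"
  using Dbas_nz[OF assms] by (auto simp: Nc_def)

lemma Dbas_valid:
  assumes "(Dbas m j a c :: 'a::field) \<noteq> 0" "valid_idx TYPE('a) m n tt a"
  shows "valid_idx TYPE('a) m n tt c"
proof -
  have le: "fst a j - 1 \<le> piv TYPE('a) tt j" if "fst a j \<le> piv TYPE('a) tt j" using that by linarith
  show ?thesis using Dbas_nz[OF assms(1)] assms(2) le unfolding valid_idx_def by auto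
qed

lemma Lmult_ebas_nz:
  assumes "a \<in> Vset TYPE('a::field) m n tt" "(Lmult m n tt (ebas a) g c :: 'a) \<noteq> 0"
  shows "\<exists>b. g b \<noteq> 0 \<and> (bmult m n tt a b c :: 'a) \<noteq> 0"
proof -
  from assms have "(\<Sum>b\<in>Vset TYPE('a) m n tt. g b * bmult m n tt a b c) \<noteq> 0"
    by (simp add: Lmult_ebas_left)
  then obtain b where "g b * bmult m n tt a b c \<noteq> 0"
    by (meson sum.not_neutral_contains_not_neutral)
  then show ?thesis by (intro exI[of _ b]) auto
qed

lemma Lmult_valid:
  assumes "(Lmult m n tt f g c :: 'a::field) \<noteq> 0"
  shows "valid_idx TYPE('a) m n tt c"
proof -
  from assms obtain a where "(\<Sum>b\<in>Vset TYPE('a) m n tt. f a * g b * bmult m n tt a b c) \<noteq> 0"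
    unfolding Lmult_def by (meson sum.not_neutral_contains_not_neutral)
  then obtain b where "f a * g b * bmult m n tt a b c \<noteq> 0"
    by (meson sum.not_neutral_contains_not_neutral)
  then show ?thesis using bmult_nz(3)[of m n tt a b c] by auto
qed

lemma sum_fun_app: "(\<Sum>i\<in>S. f i) x = (\<Sum>i\<in>S. f i x)"
  by (induction S rule: infinite_finite_induct) auto

lemma Wbr_apply:
  "(Wbr m n tt w z r x :: 'a::field) = (\<Sum>i\<in>Y m n. \<Sum>a\<in>Vset TYPE('a) m n tt. \<Sum>j\<in>Y m n. \<Sum>b\<in>Vset TYPE('a) m n tt.
      w i a * z j b * bbr m n tt i a j b r x)"
  unfolding Wbr_def wsmult_def by (simp add: sum_fun_app)



definition Wt :: "nat \<Rightarrow> nat \<Rightarrow> nat \<Rightarrow> idx \<Rightarrow> int" where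
  "Wt m n l x = int (Nc (pr m n l) x) - int (Nc l x)"

definition Wq :: "nat \<Rightarrow> nat \<Rightarrow> nat \<Rightarrow> nat \<Rightarrow> int" where
  "Wq m n l q = (if q = pr m n l then 1 else 0) - (if q = l then 1 else 0)"

lemma Lmult_Dbas_grade:
  assumes "a \<in> Vset TYPE('a::field) m n tt"
    and "(Lmult m n tt (ebas a) (Dbas m i b) x :: 'a) \<noteq> 0"
  shows "valid_idx TYPE('a) m n tt x \<and> Wt m n l x = Wt m n l a + Wt m n l b - Wq m n l i"
proof -
  obtain b' where b1: "(Dbas m i b b' :: 'a) \<noteq> 0" and b2: "(bmult m n tt a b' x :: 'a) \<noteq> 0"
    using Lmult_ebas_nz[OF assms] by blast
  have "\<And>t. int (Nc t x) = int (Nc t a) + int (Nc t b) - (if t = i then 1 else 0)"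
    using Nc_bmult[OF b2] Nc_Dbas[OF b1] by simp
  then show ?thesis using bmult_nz(3)[OF b2] by (simp add: Wt_def Wq_def)
qed

lemma bbr_grade:
  assumes "a \<in> Vset TYPE('a::field) m n tt" "b \<in> Vset TYPE('a) m n tt"
    and "(bbr m n tt i a j b r x :: 'a) \<noteq> 0"
  shows "(r = i \<or> r = j) \<and> x \<in> Vset TYPE('a) m n tt \<and>
     Wt m n l x - Wq m n l r = (Wt m n l a - Wq m n l i) + (Wt m n l b - Wq m n l j)"
proof -
  let ?s = "(-1::'a) ^ ((card (snd a) + tau m i) * (card (snd b) + tau m j))"
  have e: "(bbr m n tt i a j b r x :: 'a) = (if r = j then Lmult m n tt (ebas a) (Dbas m i b) x else 0)
     - (if r = i then ?s * Lmult m n tt (ebas b) (Dbas m j a) x else 0)"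
    by (simp add: bbr_def lsmult_def)
  show ?thesis
  proof (cases "r = j \<and> (Lmult m n tt (ebas a) (Dbas m i b) x :: 'a) \<noteq> 0")
    case True
    then show ?thesis using Lmult_Dbas_grade[OF assms(1), of i b x l] by (auto simp: Vset_def)
  next
    case False
    then have "r = i \<and> (Lmult m n tt (ebas b) (Dbas m j a) x :: 'a) \<noteq> 0"
      using assms(3) unfolding e by (auto split: if_splits)
    then show ?thesis using Lmult_Dbas_grade[OF assms(2), of j a x l] by (auto simp: Vset_def)
  qed
qed


lemma neg1_sq: "((-1::'a::ring_1) ^ k) * (-1) ^ k = 1"
  by (simp flip: power_add)

lemma bbr_swap:
  "(bbr m n tt i a j b r x :: 'a::field) =
     - ((-1) ^ ((card (snd a) + tau m i) * (card (snd b) + tau m j)) * bbr m n tt j b i a r x)"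
proof -
  let ?k = "(card (snd a) + tau m i) * (card (snd b) + tau m j)"
  have k: "(card (snd b) + tau m j) * (card (snd a) + tau m i) = ?k" by simp
  have s: "((-1::'a) ^ ?k) * (-1) ^ ?k = 1" by (rule neg1_sq)
  show ?thesis
  proof (cases "r = i"; cases "r = j")
    assume "r = i" "r = j" then show ?thesis
      by (simp add: bbr_def lsmult_def k algebra_simps mult.assoc[symmetric] s)
  next
    assume "r = i" "r \<noteq> j" then show ?thesis
      by (simp add: bbr_def lsmult_def k algebra_simps mult.assoc[symmetric] s)
  next
    assume "r \<noteq> i" "r = j" then show ?thesis
      by (simp add: bbr_def lsmult_def k algebra_simps mult.assoc[symmetric] s)
  next
    assume "r \<noteq> i" "r \<noteq> j" then show ?thesis
      by (simp add: bbr_def lsmult_def)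
  qed
qed

lemma Wbr_add_left: "(Wbr m n tt (w1 + w2) z :: 'a::field witt) = Wbr m n tt w1 z + Wbr m n tt w2 z"
  by (auto simp: fun_eq_iff Wbr_apply algebra_simps sum.distrib)
lemma Wbr_add_right: "(Wbr m n tt z (w1 + w2) :: 'a::field witt) = Wbr m n tt z w1 + Wbr m n tt z w2"
  by (auto simp: fun_eq_iff Wbr_apply algebra_simps sum.distrib)
lemma Wbr_smult_left: "(Wbr m n tt (c \<cdot>w w) z :: 'a::field witt) = c \<cdot>w Wbr m n tt w z"
  by (auto simp: fun_eq_iff Wbr_apply wsmult_def algebra_simps sum_distrib_left)
lemma Wbr_smult_right: "(Wbr m n tt z (c \<cdot>w w) :: 'a::field witt) = c \<cdot>w Wbr m n tt z w"
  by (auto simp: fun_eq_iff Wbr_apply wsmult_def algebra_simps sum_distrib_left)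
lemma Wbr_zero_left: "(Wbr m n tt 0 z :: 'a::field witt) = 0"
  by (auto simp: fun_eq_iff Wbr_apply)
lemma Wbr_zero_right: "(Wbr m n tt z 0 :: 'a::field witt) = 0"
  by (auto simp: fun_eq_iff Wbr_apply)
lemma Wbr_uminus_left: "(Wbr m n tt (- w) z :: 'a::field witt) = - Wbr m n tt w z"
  by (auto simp: fun_eq_iff Wbr_apply sum_negf)
lemma Wbr_uminus_right: "(Wbr m n tt z (- w) :: 'a::field witt) = - Wbr m n tt z w"
  by (auto simp: fun_eq_iff Wbr_apply sum_negf)
lemma Wbr_diff_left: "(Wbr m n tt (w1 - w2) z :: 'a::field witt) = Wbr m n tt w1 z - Wbr m n tt w2 z"
  by (auto simp: fun_eq_iff Wbr_apply algebra_simps sum_subtractf)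
lemma Wbr_diff_right: "(Wbr m n tt z (w1 - w2) :: 'a::field witt) = Wbr m n tt z w1 - Wbr m n tt z w2"
  by (auto simp: fun_eq_iff Wbr_apply algebra_simps sum_subtractf)

lemma neg1_pow_mod2: "((-1::'a::ring_1) ^ k) = (-1) ^ (k mod 2)"
  by (simp add: minus_one_power_iff even_iff_mod_2_eq_zero)

lemma Wbr_skew:
  assumes X: "(X :: 'a::field witt) \<in> Wpar m p" and Yp: "Z \<in> Wpar m q"
  shows "Wbr m n tt X Z = - (((-1) ^ (p * q)) \<cdot>w Wbr m n tt Z X)"
proof (rule ext, rule ext)
  fix r x
  let ?V = "Vset TYPE('a) m n tt" and ?Y = "Y m n"
  have trm: "X i a * Z j b * bbr m n tt i a j b r x = - ((-1) ^ (p * q) * (Z j b * X i a * bbr m n tt j b i a r x))"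
    for i a j b
  proof (cases "X i a = 0 \<or> Z j b = 0")
    case True then show ?thesis by auto
  next
    case False
    have pa: "(card (snd a) + tau m i) mod 2 = p" using X False unfolding Wpar_def by blast
    have pb: "(card (snd b) + tau m j) mod 2 = q" using Yp False unfolding Wpar_def by blast
    have "((-1::'a) ^ ((card (snd a) + tau m i) * (card (snd b) + tau m j))) = (-1) ^ (p * q)"
    proof -
      have "even (card (snd a) + tau m i) = even p" using pa by presburger
      moreover have "even (card (snd b) + tau m j) = even q" using pb by presburger
      ultimately show ?thesis by (simp add: minus_one_power_iff)
    qed
    then show ?thesis by (subst bbr_swap) (simp add: algebra_simps)
  qed
  have "Wbr m n tt X Z r x = (\<Sum>i\<in>?Y. \<Sum>a\<in>?V. \<Sum>j\<in>?Y. \<Sum>b\<in>?V.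
      - ((-1) ^ (p * q) * (Z j b * X i a * bbr m n tt j b i a r x)))"
    by (simp add: Wbr_apply trm)
  also have "\<dots> = (\<Sum>j\<in>?Y. \<Sum>b\<in>?V. \<Sum>i\<in>?Y. \<Sum>a\<in>?V.
      - ((-1) ^ (p * q) * (Z j b * X i a * bbr m n tt j b i a r x)))"
    by (subst sum.swap, subst (2) sum.swap, rule sum.cong[OF refl], subst sum.swap, rule sum.cong[OF refl], rule sum.swap)
  also have "\<dots> = - ((-1) ^ (p * q) * Wbr m n tt Z X r x)"
    by (simp add: Wbr_apply sum_negf sum_distrib_left)
  finally show "Wbr m n tt X Z r x = (- (((-1) ^ (p * q)) \<cdot>w Wbr m n tt Z X)) r x"
    by (simp add: wsmult_def)
qed


definition cleanW :: "nat \<Rightarrow> nat \<Rightarrow> (nat \<Rightarrow> nat) \<Rightarrow> ('a::field) witt \<Rightarrow> bool" where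
  "cleanW m n tt w \<longleftrightarrow> (\<forall>i a. w i a \<noteq> 0 \<longrightarrow> i \<in> Y m n \<and> a \<in> Vset TYPE('a) m n tt)"

lemma Wbr_clean: "cleanW m n tt (Wbr m n tt w z :: 'a::field witt)"
  unfolding cleanW_def
proof (intro allI impI)
  fix r x assume "(Wbr m n tt w z r x :: 'a) \<noteq> 0"
  then obtain i where i: "i \<in> Y m n" and
    s1: "(\<Sum>a\<in>Vset TYPE('a) m n tt. \<Sum>j\<in>Y m n. \<Sum>b\<in>Vset TYPE('a) m n tt. w i a * z j b * bbr m n tt i a j b r x) \<noteq> 0"
    unfolding Wbr_apply using sum.not_neutral_contains_not_neutral by blast
  then obtain a where a: "a \<in> Vset TYPE('a) m n tt" and
    s2: "(\<Sum>j\<in>Y m n. \<Sum>b\<in>Vset TYPE('a) m n tt. w i a * z j b * bbr m n tt i a j b r x) \<noteq> 0"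
    using sum.not_neutral_contains_not_neutral by blast
  then obtain j where j: "j \<in> Y m n" and
    s3: "(\<Sum>b\<in>Vset TYPE('a) m n tt. w i a * z j b * bbr m n tt i a j b r x) \<noteq> 0"
    using sum.not_neutral_contains_not_neutral by blast
  then obtain b where b: "b \<in> Vset TYPE('a) m n tt" and
    nz: "w i a * z j b * bbr m n tt i a j b r x \<noteq> 0"
    using sum.not_neutral_contains_not_neutral by blast
  note ij = i j and ab = a b
  from nz have "(bbr m n tt i a j b r x :: 'a) \<noteq> 0" by auto
  from bbr_grade[OF ab this, of 0] ij show "r \<in> Y m n \<and> x \<in> Vset TYPE('a) m n tt" by auto
qed

lemma lspan_clean:
  assumes "\<And>w. w \<in> S \<Longrightarrow> cleanW m n tt (w :: 'a::field witt)" "v \<in> lspan S"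
  shows "cleanW m n tt v"
proof -
  from assms(2) obtain F c where F: "finite F" "F \<subseteq> S" "v = (\<Sum>u\<in>F. c u \<cdot>w u)"
    by (auto simp: lspan_def)
  show ?thesis unfolding cleanW_def
  proof (intro allI impI)
    fix i a assume "v i a \<noteq> 0"
    then have "(\<Sum>u\<in>F. c u * u i a) \<noteq> 0" using F(3) by (simp add: sum_fun_app wsmult_def)
    then obtain u where "u \<in> F" "c u * u i a \<noteq> 0" by (meson sum.not_neutral_contains_not_neutral)
    then have "u \<in> S" "u i a \<noteq> 0" using F(2) by auto
    with assms(1)[of u] show "i \<in> Y m n \<and> a \<in> Vset TYPE('a) m n tt" unfolding cleanW_def by blast
  qed
qed

lemma Hset_clean: "w \<in> Hset m n tt \<Longrightarrow> cleanW m n tt (w :: 'a::field witt)"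
  unfolding Hset_def by (rule lspan_clean) (auto intro: Wbr_clean)



definition ix :: "nat \<Rightarrow> nat \<Rightarrow> idx" where
  "ix m q = (if q \<in> Y0 m then ((\<lambda>j. 0)(q := 1), {}) else ((\<lambda>j. 0), {q}))"

definition z0 :: idx where "z0 = ((\<lambda>j. 0), {})"

definition Eb :: "nat \<Rightarrow> idx \<Rightarrow> ('a::field) witt" where
  "Eb q b = (\<lambda>i. if i = q then ebas b else 0)"

lemma piv_ge2:
  assumes "CHAR('a::field) > 2" "tt j > 0"
  shows "piv TYPE('a) tt j \<ge> 2"
proof -
  have "CHAR('a) \<le> CHAR('a) ^ tt j" using assms by (simp add: self_le_power)
  then show ?thesis using assms by (simp add: piv_def)
qed

lemma Y_split: "q \<in> Y m n \<Longrightarrow> q \<notin> Y0 m \<Longrightarrow> q \<in> Y1 m n"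
  by (auto simp: Y_def Y0_def Y1_def)

lemma Y0_sub: "q \<in> Y0 m \<Longrightarrow> q \<in> Y m n"
  by (auto simp: Y_def Y0_def)

lemma Y1_notY0: "q \<in> Y1 m n \<Longrightarrow> q \<notin> Y0 m"
  by (auto simp: Y1_def Y0_def)

lemma ix_valid:
  assumes "CHAR('a::field) > 2" "\<forall>j\<in>Y0 m. tt j > 0" "q \<in> Y m n"
  shows "ix m q \<in> Vset TYPE('a) m n tt"
proof (cases "q \<in> Y0 m")
  case True
  then have "piv TYPE('a) tt q \<ge> 2" using assms piv_ge2 by blast
  then show ?thesis using True by (auto simp: ix_def Vset_def valid_idx_def)
next
  case False
  then show ?thesis using Y_split[OF assms(3)] by (auto simp: ix_def Vset_def valid_idx_def)
qed

lemma z0_valid: "z0 \<in> Vset TYPE('a::field) m n tt"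
  by (auto simp: z0_def Vset_def valid_idx_def)

lemma Nc_ix: "Nc t (ix m q) = (if t = q then 1 else 0)"
  by (auto simp: Nc_def ix_def)

lemma Nc_z0: "Nc t z0 = 0"
  by (auto simp: Nc_def z0_def)

lemma Wt_ix: "Wt m n l (ix m q) = Wq m n l q"
  by (auto simp: Wt_def Wq_def Nc_ix)

lemma Wt_z0: "Wt m n l z0 = 0"
  by (auto simp: Wt_def Nc_z0)

lemma Dbas_ix: "(Dbas m q (ix m p) :: 'a::field lam) = (if q = p then ebas z0 else 0)"
proof -
  have u: "(\<lambda>j::nat. 0::nat)(p := 0) = (\<lambda>j. 0)" by auto
  have c: "{j. j = p \<and> j < p} = {}" by auto
  show ?thesis by (auto simp: Dbas_def ix_def z0_def lsmult_def u c)
qed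

lemma Dbas_z0: "(Dbas m q z0 :: 'a::field lam) = 0"
  by (auto simp: Dbas_def z0_def)

lemma valid_snd_Y1: "valid_idx T m n tt b \<Longrightarrow> snd b \<subseteq> Y1 m n"
  by (simp add: valid_idx_def)

lemma bmult_z0_right:
  assumes "valid_idx TYPE('a::field) m n tt b"
  shows "(bmult m n tt b z0 :: 'a lam) = ebas b"
proof -
  have e: "(\<lambda>j. fst b j + fst z0 j, snd b \<union> snd z0) = b" by (simp add: z0_def)
  show ?thesis unfolding bmult_def Let_def e using assms by (simp add: z0_def lsmult_def)
qed

lemma bmult_z0_left:
  assumes "valid_idx TYPE('a::field) m n tt b"
  shows "(bmult m n tt z0 b :: 'a lam) = ebas b"
proof -
  have e: "(\<lambda>j. fst z0 j + fst b j, snd z0 \<union> snd b) = b" by (simp add: z0_def)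
  show ?thesis unfolding bmult_def Let_def e using assms by (simp add: z0_def lsmult_def)
qed

lemma Lmult_ebas_ebas:
  assumes "a \<in> Vset TYPE('a::field) m n tt" "b \<in> Vset TYPE('a) m n tt"
  shows "(Lmult m n tt (ebas a) (ebas b) :: 'a lam) = bmult m n tt a b"
proof
  fix c
  show "(Lmult m n tt (ebas a) (ebas b) c :: 'a) = bmult m n tt a b c"
    unfolding Lmult_ebas_left[OF assms(1)] using assms finite_Vset by (subst ebas_mult_sum) auto
qed

lemma Lmult_z0_right:
  assumes "b \<in> Vset TYPE('a::field) m n tt"
  shows "(Lmult m n tt (ebas b) (ebas z0) :: 'a lam) = ebas b"
proof -
  have "z0 \<in> Vset TYPE('a) m n tt" by (rule z0_valid)
  then show ?thesis using assms by (simp add: Lmult_ebas_ebas bmult_z0_right Vset_def)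
qed

lemma Lmult_z0_left:
  assumes "\<And>c. g c \<noteq> 0 \<Longrightarrow> c \<in> Vset TYPE('a::field) m n tt"
  shows "(Lmult m n tt (ebas z0) g :: 'a lam) = g"
proof
  fix c
  have "(Lmult m n tt (ebas z0) g c :: 'a) = (\<Sum>b\<in>Vset TYPE('a) m n tt. g b * bmult m n tt z0 b c)"
    using z0_valid by (rule Lmult_ebas_left)
  also have "\<dots> = (\<Sum>b\<in>Vset TYPE('a) m n tt. ebas c b * g b)"
    by (intro sum.cong) (auto simp: bmult_z0_left Vset_def ebas_def)
  also have "\<dots> = g c" using assms[of c] finite_Vset by (subst ebas_mult_sum) auto
  finally show "(Lmult m n tt (ebas z0) g c :: 'a) = g c" .
qed

lemma Lmult_lsmult_right:
  "(Lmult m n tt f (lsmult s g) :: 'a::field lam) = lsmult s (Lmult m n tt f g)"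
  unfolding Lmult_def lsmult_def by (auto simp: sum_distrib_left algebra_simps fun_eq_iff)

lemma Lmult_zero_right: "(Lmult m n tt f 0 :: 'a::field lam) = 0"
  unfolding Lmult_def by (auto simp: fun_eq_iff)

lemma Dbas_supp:
  assumes "b \<in> Vset TYPE('a::field) m n tt" "(Dbas m j b c :: 'a) \<noteq> 0"
  shows "c \<in> Vset TYPE('a) m n tt"
  using Dbas_valid[OF assms(2)] assms(1) by (auto simp: Vset_def)



lemma lsmult_zero: "lsmult 0 f = (0 :: 'a::field lam)"
  by (simp add: lsmult_def fun_eq_iff)
lemma lsmult_lsmult: "lsmult a (lsmult b f) = lsmult (a * b) (f :: 'a::field lam)"
  by (simp add: lsmult_def fun_eq_iff mult.assoc)
lemma lsmult_one: "lsmult 1 f = (f :: 'a::field lam)"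
  by (simp add: lsmult_def fun_eq_iff)

lemma card_pairs_p:
  "card {(i, j). i \<in> {p} \<and> j \<in> S - {p} \<and> j < i} = card {j \<in> S. j < (p::nat)}"
proof -
  have "{(i, j). i \<in> {p} \<and> j \<in> S - {p} \<and> j < i} = (\<lambda>j. (p, j)) ` {j \<in> S. j < p}" by auto
  moreover have "inj_on (\<lambda>j. (p, j)) {j \<in> S. j < p}" by (auto simp: inj_on_def)
  ultimately show ?thesis by (simp add: card_image)
qed

lemma Lmult_ix_Dbas:
  assumes ch: "CHAR('a::field) > 2" "\<forall>j\<in>Y0 m. tt j > 0" and p: "p \<in> Y m n"
    and b: "b \<in> Vset TYPE('a) m n tt"
  shows "(Lmult m n tt (ebas (ix m p)) (Dbas m p b) :: 'a lam) = lsmult (of_nat (Nc p b)) (ebas b)"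
proof -
  have ixv: "ix m p \<in> Vset TYPE('a) m n tt" using ix_valid[OF ch p] .
  have bv: "valid_idx TYPE('a) m n tt b" using b by (simp add: Vset_def)
  show ?thesis
  proof (cases "p \<in> Y0 m")
    case True
    have pnot: "p \<notin> snd b" using bv True Y1_notY0 by (auto simp: valid_idx_def)
    show ?thesis
    proof (cases "fst b p = 0")
      case True
      then show ?thesis using \<open>p \<in> Y0 m\<close> pnot
        by (simp add: Dbas_def Lmult_zero_right Nc_def lsmult_zero)
    next
      case False
      let ?b' = "((fst b)(p := fst b p - 1), snd b)"
      have D: "(Dbas m p b :: 'a lam) = ebas ?b'" using False \<open>p \<in> Y0 m\<close> by (simp add: Dbas_def)
      have b'v: "?b' \<in> Vset TYPE('a) m n tt"
      proof -
        have "(Dbas m p b ?b' :: 'a) \<noteq> 0" using D by (simp add: ebas_def)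
        then show ?thesis using Dbas_supp[OF b] by blast
      qed
      have c: "(\<lambda>j. fst (ix m p) j + fst ?b' j, snd (ix m p) \<union> snd ?b') = b"
        using False \<open>p \<in> Y0 m\<close> by (intro prod_eqI) (auto simp: ix_def fun_eq_iff)
      have pr: "(\<Prod>j\<in>Y0 m. (of_nat ((fst (ix m p) j + fst ?b' j) choose fst (ix m p) j) :: 'a))
          = (\<Prod>j\<in>Y0 m. if j = p then of_nat (fst b p) else 1)"
        using False \<open>p \<in> Y0 m\<close> by (intro prod.cong) (auto simp: ix_def)
      have fin: "finite (Y0 m)" by (simp add: Y0_def)
      have "(Lmult m n tt (ebas (ix m p)) (Dbas m p b) :: 'a lam) = bmult m n tt (ix m p) ?b'"
        using D Lmult_ebas_ebas[OF ixv b'v] by simp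
      also have "\<dots> = lsmult (of_nat (fst b p)) (ebas b)"
        unfolding bmult_def Let_def c
        using bv \<open>p \<in> Y0 m\<close> pr fin by (simp add: ix_def prod.delta)
      finally show ?thesis using pnot by (simp add: Nc_def)
    qed
  next
    case False
    have fb: "fst b p = 0" using bv False by (simp add: valid_idx_def)
    show ?thesis
    proof (cases "p \<in> snd b")
      case False
      then show ?thesis using \<open>p \<notin> Y0 m\<close> fb
        by (simp add: Dbas_def Lmult_zero_right Nc_def lsmult_zero)
    next
      case True
      let ?b' = "(fst b, snd b - {p})"
      let ?s = "(-1::'a) ^ card {j \<in> snd b. j < p}"
      have D: "(Dbas m p b :: 'a lam) = lsmult ?s (ebas ?b')" using True \<open>p \<notin> Y0 m\<close> by (simp add: Dbas_def)
      have b'v: "?b' \<in> Vset TYPE('a) m n tt" using bv by (auto simp: Vset_def valid_idx_def)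
      have c: "(\<lambda>j. fst (ix m p) j + fst ?b' j, snd (ix m p) \<union> snd ?b') = b"
        using True \<open>p \<notin> Y0 m\<close> by (intro prod_eqI) (auto simp: ix_def insert_absorb)
      have pr: "(\<Prod>j\<in>Y0 m. (of_nat ((fst (ix m p) j + fst ?b' j) choose fst (ix m p) j) :: 'a)) = 1"
        using \<open>p \<notin> Y0 m\<close> by (intro prod.neutral) (auto simp: ix_def)
      have cd: "card {(i, j). i \<in> snd (ix m p) \<and> j \<in> snd ?b' \<and> j < i} = card {j \<in> snd b. j < p}"
        using \<open>p \<notin> Y0 m\<close> card_pairs_p[of p "snd b"] by (simp add: ix_def)
      have "(Lmult m n tt (ebas (ix m p)) (Dbas m p b) :: 'a lam) = lsmult ?s (bmult m n tt (ix m p) ?b')"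
        using D Lmult_ebas_ebas[OF ixv b'v] by (simp add: Lmult_lsmult_right)
      also have "bmult m n tt (ix m p) ?b' = lsmult ?s (ebas b)"
        unfolding bmult_def Let_def c
        using bv \<open>p \<notin> Y0 m\<close> pr cd by (simp add: ix_def)
      finally show ?thesis using True fb by (simp add: Nc_def lsmult_lsmult neg1_sq lsmult_one)
    qed
  qed
qed



lemma bbr_ix:
  assumes ch: "CHAR('a::field) > 2" "\<forall>j\<in>Y0 m. tt j > 0" and p: "p \<in> Y m n"
    and b: "b \<in> Vset TYPE('a) m n tt"
  shows "(bbr m n tt p (ix m p) q b r x :: 'a) =
     (if r = q then of_nat (Nc p b) * ebas b x else 0) - (if r = p \<and> q = p then ebas b x else 0)"
proof -
  have ev: "even (card (snd (ix m p)) + tau m p)" by (auto simp: ix_def tau_def)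
  then have s: "((-1::'a) ^ ((card (snd (ix m p)) + tau m p) * k)) = 1" for k
    by (simp add: minus_one_power_iff)
  show ?thesis
    unfolding bbr_def using Lmult_ix_Dbas[OF ch p b] Lmult_z0_right[OF b]
    by (simp add: s Dbas_ix Lmult_zero_right lsmult_def)
qed

lemma Eb_sum:
  assumes "p \<in> Y m n" "c \<in> Vset TYPE('a::field) m n tt"
  shows "(\<Sum>i\<in>Y m n. \<Sum>a\<in>Vset TYPE('a) m n tt. (Eb p c i a :: 'a) * G i a) = G p c"
proof -
  have "(\<Sum>i\<in>Y m n. \<Sum>a\<in>Vset TYPE('a) m n tt. (Eb p c i a :: 'a) * G i a)
      = (\<Sum>i\<in>Y m n. if i = p then (\<Sum>a\<in>Vset TYPE('a) m n tt. ebas c a * G i a) else 0)"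
    by (intro sum.cong) (auto simp: Eb_def)
  also have "\<dots> = (\<Sum>a\<in>Vset TYPE('a) m n tt. ebas c a * G p a)"
    using assms(1) by (simp add: sum.delta' Y_def)
  also have "\<dots> = G p c" using assms(2) finite_Vset by (subst ebas_mult_sum) auto
  finally show ?thesis .
qed

lemma Wbr_Eb_left:
  assumes "p \<in> Y m n" "c \<in> Vset TYPE('a::field) m n tt"
  shows "(Wbr m n tt (Eb p c) X r x :: 'a) =
    (\<Sum>q\<in>Y m n. \<Sum>b\<in>Vset TYPE('a) m n tt. X q b * bbr m n tt p c q b r x)"
proof -
  have "(Wbr m n tt (Eb p c) X r x :: 'a) = (\<Sum>i\<in>Y m n. \<Sum>a\<in>Vset TYPE('a) m n tt. Eb p c i a *
     (\<Sum>q\<in>Y m n. \<Sum>b\<in>Vset TYPE('a) m n tt. X q b * bbr m n tt i a q b r x))"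
    by (simp add: Wbr_apply sum_distrib_left mult.assoc)
  also have "\<dots> = (\<Sum>q\<in>Y m n. \<Sum>b\<in>Vset TYPE('a) m n tt. X q b * bbr m n tt p c q b r x)"
    using assms by (rule Eb_sum)
  finally show ?thesis .
qed

lemma finite_Y: "finite (Y m n)" by (simp add: Y_def)

lemma sum_delta2:
  "(\<Sum>q\<in>Y m n. \<Sum>b\<in>Vset TYPE('a::field) m n tt. (if r = q then F q b * (ebas b x :: 'a) else 0)) =
    (if r \<in> Y m n \<and> x \<in> Vset TYPE('a) m n tt then F r x else 0)"
proof -
  have "(\<Sum>q\<in>Y m n. \<Sum>b\<in>Vset TYPE('a::field) m n tt. (if r = q then F q b * (ebas b x :: 'a) else 0)) =
     (\<Sum>q\<in>Y m n. if r = q then (\<Sum>b\<in>Vset TYPE('a::field) m n tt. (if x = b then F q b else 0)) else 0)"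
    by (intro sum.cong) (auto simp: ebas_def intro!: sum.cong)
  also have "\<dots> = (if r \<in> Y m n \<and> x \<in> Vset TYPE('a) m n tt then F r x else 0)"
    by (simp add: sum.delta sum.delta' finite_Vset finite_Y)
  finally show ?thesis .
qed

lemma Wbr_Eb_ix:
  assumes ch: "CHAR('a::field) > 2" "\<forall>j\<in>Y0 m. tt j > 0" and p: "p \<in> Y m n"
  shows "(Wbr m n tt (Eb p (ix m p)) X r x :: 'a) =
    (if r \<in> Y m n \<and> x \<in> Vset TYPE('a) m n tt then (of_nat (Nc p x) - (if r = p then 1 else 0)) * X r x else 0)"
proof -
  have ixv: "ix m p \<in> Vset TYPE('a) m n tt" using ix_valid[OF ch p] .
  have "(Wbr m n tt (Eb p (ix m p)) X r x :: 'a) =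
     (\<Sum>q\<in>Y m n. \<Sum>b\<in>Vset TYPE('a) m n tt. (if r = q then (X q b * of_nat (Nc p b)) * ebas b x else 0)
        - (if r = q then (if r = p then X q b else 0) * ebas b x else 0))"
    unfolding Wbr_Eb_left[OF p ixv]
    by (intro sum.cong refl) (auto simp: bbr_ix[OF ch p] algebra_simps)
  also have "\<dots> = (if r \<in> Y m n \<and> x \<in> Vset TYPE('a) m n tt then X r x * of_nat (Nc p x) else 0)
      - (if r \<in> Y m n \<and> x \<in> Vset TYPE('a) m n tt then (if r = p then X r x else 0) else 0)"
    by (simp only: sum_subtractf sum_delta2)
  finally show ?thesis by (auto simp: algebra_simps)
qed

lemma Wbr_Eb_z0:
  assumes j: "j \<in> Y m n"
  shows "(Wbr m n tt (Eb j z0) X r x :: 'a::field) = (if r \<in> Y m n then Dop m n tt j (X r) x else 0)"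
proof -
  have zv: "z0 \<in> Vset TYPE('a) m n tt" by (rule z0_valid)
  have bb: "(bbr m n tt j z0 q b r x :: 'a) = (if r = q then Dbas m j b x else 0)"
    if b: "b \<in> Vset TYPE('a) m n tt" for q b
  proof -
    have "(Lmult m n tt (ebas z0) (Dbas m j b) :: 'a lam) = Dbas m j b"
      by (rule Lmult_z0_left) (use Dbas_supp[OF b] in blast)
    then show ?thesis unfolding bbr_def by (simp add: Dbas_z0 Lmult_zero_right lsmult_def)
  qed
  have "(Wbr m n tt (Eb j z0) X r x :: 'a) =
     (\<Sum>q\<in>Y m n. if r = q then (\<Sum>b\<in>Vset TYPE('a) m n tt. X q b * Dbas m j b x) else 0)"
    unfolding Wbr_Eb_left[OF j zv] by (intro sum.cong refl) (auto simp: bb)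
  also have "\<dots> = (if r \<in> Y m n then Dop m n tt j (X r) x else 0)"
    using finite_Y by (simp add: sum.delta Dop_def)
  finally show ?thesis .
qed



definition kap :: "nat \<Rightarrow> nat \<Rightarrow> idx \<Rightarrow> nat \<Rightarrow> 'a::field" where
  "kap m n g i = of_int (sig m (pr m n i)) * (-1) ^ (tau m (pr m n i) * (if odd (card (snd g)) then 1 else 0))"

lemma dL_ebas: "dL (ebas g :: 'a::field lam) = (if odd (card (snd g)) then 1 else 0)"
  by (cases g) (auto simp: dL_def ebas_def)

lemma DH_ebas:
  assumes "g \<in> Vset TYPE('a::field) m n tt"
  shows "(DH m n tt (ebas g) :: 'a witt) i = (if i \<in> Y m n then lsmult (kap m n g i) (Dbas m (pr m n i) g) else 0)"
  using assms by (simp add: DH_def dL_ebas Dop_ebas kap_def)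

lemma dL_lsmult: "c \<noteq> 0 \<Longrightarrow> dL (lsmult c f :: 'a::field lam) = dL f"
  by (simp add: dL_def lsmult_def)

lemma DH_lsmult: "c \<noteq> 0 \<Longrightarrow> (DH m n tt (lsmult c f) :: 'a::field witt) = c \<cdot>w DH m n tt f"
proof -
  assume c: "c \<noteq> 0"
  show ?thesis unfolding DH_def dL_lsmult[OF c] Dop_lsmult
    by (auto simp: wsmult_def lsmult_def fun_eq_iff algebra_simps)
qed

lemma xg_ix: "xg m q = ebas (ix m q)"
  by (simp add: xg_def ix_def)

definition g2 :: "nat \<Rightarrow> nat \<Rightarrow> nat \<Rightarrow> idx" where
  "g2 m n l = (if l \<in> Y0 m then ((\<lambda>j. 0)(l := 1, pr m n l := 1), {}) else ((\<lambda>j. 0), {l, pr m n l}))"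

definition eps :: "nat \<Rightarrow> nat \<Rightarrow> nat \<Rightarrow> 'a::field" where
  "eps m n l = (if l \<notin> Y0 m \<and> pr m n l < l then -1 else 1)"

context
  fixes m n :: nat and tt :: "nat \<Rightarrow> nat"
  assumes em: "even m" and en: "even n" and tpos: "\<forall>j\<in>Y0 m. tt j > 0"
begin

lemma g2_valid:
  assumes ch: "CHAR('a::field) > 2" and l: "l \<in> Y m n"
  shows "g2 m n l \<in> Vset TYPE('a) m n tt"
proof (cases "l \<in> Y0 m")
  case True
  have "pr m n l \<in> Y0 m" using pr_facts[OF em en l] True by simp
  moreover have "piv TYPE('a) tt l \<ge> 2" "piv TYPE('a) tt (pr m n l) \<ge> 2"
    using True \<open>pr m n l \<in> Y0 m\<close> piv_ge2[OF ch] tpos by auto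
  ultimately show ?thesis using True by (auto simp: g2_def Vset_def valid_idx_def)
next
  case False
  have "pr m n l \<notin> Y0 m" "pr m n l \<in> Y m n" using pr_facts[OF em en l] False by auto
  then show ?thesis using False l Y_split by (auto simp: g2_def Vset_def valid_idx_def)
qed

lemma Lmult_xg:
  assumes ch: "CHAR('a::field) > 2" and l: "l \<in> Y m n"
  shows "(Lmult m n tt (xg m l) (xg m (pr m n l)) :: 'a lam) = lsmult (eps m n l) (ebas (g2 m n l))"
proof -
  let ?l' = "pr m n l"
  have l': "?l' \<in> Y m n" "?l' \<noteq> l" using pr_facts[OF em en l] by auto
  have v1: "ix m l \<in> Vset TYPE('a) m n tt" using ix_valid[OF ch tpos l] .
  have v2: "ix m ?l' \<in> Vset TYPE('a) m n tt" using ix_valid[OF ch tpos l'(1)] .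
  have gv: "valid_idx TYPE('a) m n tt (g2 m n l)" using g2_valid[OF ch l] by (simp add: Vset_def)
  have "(Lmult m n tt (xg m l) (xg m ?l') :: 'a lam) = bmult m n tt (ix m l) (ix m ?l')"
    by (simp add: xg_ix Lmult_ebas_ebas[OF v1 v2])
  also have "\<dots> = lsmult (eps m n l) (ebas (g2 m n l))"
  proof (cases "l \<in> Y0 m")
    case True
    have T': "?l' \<in> Y0 m" using pr_facts[OF em en l] True by simp
    have c: "(\<lambda>j. fst (ix m l) j + fst (ix m ?l') j, snd (ix m l) \<union> snd (ix m ?l')) = g2 m n l"
      using True T' l'(2) by (auto simp: ix_def g2_def fun_eq_iff)
    have pr1: "(\<Prod>j\<in>Y0 m. (of_nat ((fst (ix m l) j + fst (ix m ?l') j) choose fst (ix m l) j) :: 'a)) = 1"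
      using True T' l'(2) by (intro prod.neutral) (auto simp: ix_def)
    show ?thesis unfolding bmult_def Let_def c using gv True T' pr1
      by (simp add: ix_def eps_def lsmult_def)
  next
    case False
    have F': "?l' \<notin> Y0 m" using pr_facts[OF em en l] False by simp
    have c: "(\<lambda>j. fst (ix m l) j + fst (ix m ?l') j, snd (ix m l) \<union> snd (ix m ?l')) = g2 m n l"
      using False F' by (auto simp: ix_def g2_def)
    have pr1: "(\<Prod>j\<in>Y0 m. (of_nat ((fst (ix m l) j + fst (ix m ?l') j) choose fst (ix m l) j) :: 'a)) = 1"
      using False F' by (intro prod.neutral) (auto simp: ix_def)
    have cd: "card {(i, j). i \<in> snd (ix m l) \<and> j \<in> snd (ix m ?l') \<and> j < i} = (if ?l' < l then 1 else 0)"
    proof -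
      have "{(i, j). i \<in> snd (ix m l) \<and> j \<in> snd (ix m ?l') \<and> j < i} = (if ?l' < l then {(l, ?l')} else {})"
        using False F' by (auto simp: ix_def)
      then show ?thesis by simp
    qed
    have dj: "snd (ix m l) \<inter> snd (ix m ?l') = {}" using False F' l'(2) by (auto simp: ix_def)
    show ?thesis unfolding bmult_def Let_def c using gv False pr1 cd dj
      by (simp add: eps_def lsmult_def)
  qed
  finally show ?thesis .
qed

definition hh :: "nat \<Rightarrow> 'a::field witt" where
  "hh l = DH m n tt (Lmult m n tt (xg m l) (xg m (pr m n l)))"

lemma hh_formula:
  assumes ch: "CHAR('a::field) > 2" and l: "l \<in> Y m n"
  shows "(hh l :: 'a witt) = of_int (sig m l) \<cdot>w (Eb (pr m n l) (ix m (pr m n l)) - Eb l (ix m l))"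
proof -
  let ?l' = "pr m n l"
  have pf: "?l' \<in> Y m n" "pr m n ?l' = l" "?l' \<noteq> l" "(?l' \<in> Y0 m) = (l \<in> Y0 m)"
    using pr_facts[OF em en l] by auto
  have gv: "g2 m n l \<in> Vset TYPE('a) m n tt" using g2_valid[OF ch l] .
  have ne: "eps m n l \<noteq> (0::'a)" by (simp add: eps_def)
  have H: "(hh l :: 'a witt) = eps m n l \<cdot>w DH m n tt (ebas (g2 m n l))"
    unfolding hh_def Lmult_xg[OF ch l] using ne by (rule DH_lsmult)
  show ?thesis
  proof (rule ext)
    fix i
    show "(hh l :: 'a witt) i = (of_int (sig m l) \<cdot>w (Eb ?l' (ix m ?l') - Eb l (ix m l))) i"
    proof (cases "i \<in> Y m n")
      case False
      then show ?thesis using l pf(1) unfolding H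
        by (auto simp: DH_ebas[OF gv] wsmult_def Eb_def fun_eq_iff)
    next
      case iY: True
      have pi: "pr m n i \<in> Y m n" "pr m n (pr m n i) = i" "(pr m n i \<in> Y0 m) = (i \<in> Y0 m)"
        using pr_facts[OF em en iY] by auto
      show ?thesis
      proof (cases "l \<in> Y0 m")
        case True
        have Y0': "?l' \<in> Y0 m" using pf True by simp
        have sl': "sig m ?l' = - sig m l" using pr_facts[OF em en l] True by simp
        have D: "(Dbas m (pr m n i) (g2 m n l) :: 'a lam) =
           (if i = ?l' then ebas (ix m ?l') else if i = l then ebas (ix m l) else 0)"
        proof -
          have u1: "((\<lambda>j::nat. 0::nat)(l := 1, ?l' := 1))(l := 0) = (\<lambda>j. 0)(?l' := 1)"
            using pf(3) by (auto simp: fun_eq_iff)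
          have u2: "((\<lambda>j::nat. 0::nat)(l := 1, ?l' := 1))(?l' := 0) = (\<lambda>j. 0)(l := 1)"
            using pf(3) by (auto simp: fun_eq_iff)
          show ?thesis
          proof (cases "i = ?l'")
            case True
            then have "pr m n i = l" using pf by simp
            then show ?thesis using True \<open>l \<in> Y0 m\<close> pf(3) u1 Y0'
              by (simp add: Dbas_def g2_def ix_def)
          next
            case False
            show ?thesis
            proof (cases "i = l")
              case True
              then have "pr m n i = ?l'" by simp
              then show ?thesis using True \<open>l \<in> Y0 m\<close> pf(3) u2 Y0'
                by (simp add: Dbas_def g2_def ix_def)
            next
              case False
              have "pr m n i \<noteq> l" "pr m n i \<noteq> ?l'" using False \<open>i \<noteq> ?l'\<close> pi pf by metis+
              then show ?thesis using False \<open>i \<noteq> ?l'\<close> \<open>l \<in> Y0 m\<close>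
                by (auto simp: Dbas_def g2_def fun_eq_iff)
            qed
          qed
        qed
        have k: "kap m n (g2 m n l) i = (of_int (sig m (pr m n i)) :: 'a)"
          using True by (simp add: kap_def g2_def)
        have e1: "eps m n l = (1::'a)" using True by (simp add: eps_def)
        show ?thesis unfolding H using iY pf(3) sl'
          by (auto simp: DH_ebas[OF gv] wsmult_def Eb_def fun_eq_iff D k e1 lsmult_def pf(2))
      next
        case False
        have Y1': "?l' \<notin> Y0 m" using pf False by simp
        have iY1: "i = l \<or> i = ?l' \<Longrightarrow> sig m (pr m n i) = 1"
          using pr_facts(6)[OF em en l] pr_facts(6)[OF em en pf(1)] False Y1' pf(2) by auto
        have D: "(Dbas m (pr m n i) (g2 m n l) :: 'a lam) =
           (if i = ?l' then lsmult ((-1) ^ (if ?l' < l then 1 else 0)) (ebas (ix m ?l'))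
            else if i = l then lsmult ((-1) ^ (if l < ?l' then 1 else 0)) (ebas (ix m l)) else 0)"
        proof (cases "i = ?l'")
          case True
          then have pi': "pr m n i = l" using pf by simp
          have c: "card {j \<in> {l, ?l'}. j < l} = (if ?l' < l then 1 else 0)"
          proof -
            have "{j \<in> {l, ?l'}. j < l} = (if ?l' < l then {?l'} else {})" by auto
            then show ?thesis by simp
          qed
          have s: "{l, ?l'} - {l} = {?l'}" using pf(3) by auto
          show ?thesis using True pi' False Y1' c s by (simp add: Dbas_def g2_def ix_def)
        next
          case ne: False
          show ?thesis
          proof (cases "i = l")
            case True
            then have pi': "pr m n i = ?l'" by simp
            have c: "card {j \<in> {l, ?l'}. j < ?l'} = (if l < ?l' then 1 else 0)"
            proof -
              have "{j \<in> {l, ?l'}. j < ?l'} = (if l < ?l' then {l} else {})" by auto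
              then show ?thesis by simp
            qed
            have s: "{l, ?l'} - {?l'} = {l}" using pf(3) by auto
            show ?thesis using True ne pi' False Y1' c s by (simp add: Dbas_def g2_def ix_def)
          next
            case False
            have "pr m n i \<noteq> l" "pr m n i \<noteq> ?l'" using False ne pi pf by metis+
            then show ?thesis using False ne \<open>l \<notin> Y0 m\<close>
              by (auto simp: Dbas_def g2_def fun_eq_iff)
          qed
        qed
        have k: "i = l \<or> i = ?l' \<Longrightarrow> kap m n (g2 m n l) i = (1 :: 'a)"
          using False iY1 pf(3) by (simp add: kap_def g2_def)
        have sl: "sig m l = 1" using pr_facts(6)[OF em en l] False by simp
        have lt: "?l' < l \<longleftrightarrow> \<not> l < ?l'" using pf(3) by auto
        show ?thesis
        proof (cases "i = l \<or> i = ?l'")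
          case True
          then show ?thesis unfolding H using iY pf(3) sl lt
            by (auto simp: DH_ebas[OF gv] wsmult_def Eb_def fun_eq_iff D k eps_def False lsmult_def)
        next
          case nn: False
          then show ?thesis unfolding H using iY
            by (auto simp: DH_ebas[OF gv] wsmult_def Eb_def fun_eq_iff D lsmult_def)
        qed
      qed
    qed
  qed
qed

end



definition wt :: "nat \<Rightarrow> nat \<Rightarrow> nat \<Rightarrow> nat \<Rightarrow> idx \<Rightarrow> 'a::field" where
  "wt m n l q x = of_int (sig m l * (Wt m n l x - Wq m n l q))"

context
  fixes m n :: nat and tt :: "nat \<Rightarrow> nat"
  assumes em: "even m" and en: "even n" and tpos: "\<forall>j\<in>Y0 m. tt j > 0"
begin

lemma K1:
  assumes ch: "CHAR('a::field) > 2" and l: "l \<in> Y m n"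
  shows "(Wbr m n tt (hh m n tt l) X r x :: 'a) =
    (if r \<in> Y m n \<and> x \<in> Vset TYPE('a) m n tt then wt m n l r x * X r x else 0)"
proof -
  have pf: "pr m n l \<in> Y m n" using pr_facts[OF em en l] by auto
  have "(Wbr m n tt (hh m n tt l) X r x :: 'a) = of_int (sig m l) *
     (Wbr m n tt (Eb (pr m n l) (ix m (pr m n l))) X r x - Wbr m n tt (Eb l (ix m l)) X r x)"
    unfolding hh_formula[OF em en tpos ch l] Wbr_smult_left Wbr_diff_left by (simp add: wsmult_def)
  also have "\<dots> = (if r \<in> Y m n \<and> x \<in> Vset TYPE('a) m n tt then wt m n l r x * X r x else 0)"
    unfolding Wbr_Eb_ix[OF ch tpos pf] Wbr_Eb_ix[OF ch tpos l]
    by (simp add: wt_def Wt_def Wq_def algebra_simps)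
  finally show ?thesis .
qed

lemma wt_add:
  assumes "a \<in> Vset TYPE('a::field) m n tt" "b \<in> Vset TYPE('a) m n tt"
    and "(bbr m n tt i a j b r x :: 'a) \<noteq> 0"
  shows "r \<in> {i, j} \<and> x \<in> Vset TYPE('a) m n tt \<and> (wt m n l r x :: 'a) = wt m n l i a + wt m n l j b"
proof -
  from bbr_grade[OF assms, of l] show ?thesis
    by (auto simp: wt_def algebra_simps simp flip: of_int_add distrib_left)
qed

lemma ad_deriv:
  assumes ch: "CHAR('a::field) > 2" and l: "l \<in> Y m n"
  shows "(Wbr m n tt (hh m n tt l) (Wbr m n tt X Z) :: 'a witt) =
     Wbr m n tt (Wbr m n tt (hh m n tt l) X) Z + Wbr m n tt X (Wbr m n tt (hh m n tt l) Z)"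
proof (rule ext, rule ext)
  fix r x
  let ?V = "Vset TYPE('a) m n tt" and ?Y = "Y m n"
  have trm: "(if r \<in> ?Y \<and> x \<in> ?V then wt m n l r x * (X i a * Z j b * bbr m n tt i a j b r x) else 0)
     = (wt m n l i a * X i a) * Z j b * bbr m n tt i a j b r x + X i a * (wt m n l j b * Z j b) * bbr m n tt i a j b r x"
    if "i \<in> ?Y" "j \<in> ?Y" "a \<in> ?V" "b \<in> ?V" for i j a b
  proof (cases "(bbr m n tt i a j b r x :: 'a) = 0")
    case True then show ?thesis by simp
  next
    case False
    from wt_add[OF that(3,4) False, of l] that show ?thesis by (auto simp: algebra_simps)
  qed
  have "(Wbr m n tt (hh m n tt l) (Wbr m n tt X Z) r x :: 'a) =
     (if r \<in> ?Y \<and> x \<in> ?V then wt m n l r x * Wbr m n tt X Z r x else 0)"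
    by (rule K1[OF ch l])
  also have "\<dots> = (\<Sum>i\<in>?Y. \<Sum>a\<in>?V. \<Sum>j\<in>?Y. \<Sum>b\<in>?V.
      (if r \<in> ?Y \<and> x \<in> ?V then wt m n l r x * (X i a * Z j b * bbr m n tt i a j b r x) else 0))"
    by (auto simp: Wbr_apply sum_distrib_left)
  also have "\<dots> = (\<Sum>i\<in>?Y. \<Sum>a\<in>?V. \<Sum>j\<in>?Y. \<Sum>b\<in>?V.
      (wt m n l i a * X i a) * Z j b * bbr m n tt i a j b r x + X i a * (wt m n l j b * Z j b) * bbr m n tt i a j b r x)"
    by (intro sum.cong refl) (simp add: trm)
  also have "\<dots> = (Wbr m n tt (Wbr m n tt (hh m n tt l) X) Z + Wbr m n tt X (Wbr m n tt (hh m n tt l) Z)) r x"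
  proof -
    have A: "(Wbr m n tt (Wbr m n tt (hh m n tt l) X) Z r x :: 'a) = (\<Sum>i\<in>?Y. \<Sum>a\<in>?V. \<Sum>j\<in>?Y. \<Sum>b\<in>?V.
      (wt m n l i a * X i a) * Z j b * bbr m n tt i a j b r x)"
      unfolding Wbr_apply[of _ _ _ "Wbr m n tt (hh m n tt l) X"]
      by (intro sum.cong refl) (simp add: K1[OF ch l])
    have B: "(Wbr m n tt X (Wbr m n tt (hh m n tt l) Z) r x :: 'a) = (\<Sum>i\<in>?Y. \<Sum>a\<in>?V. \<Sum>j\<in>?Y. \<Sum>b\<in>?V.
      X i a * (wt m n l j b * Z j b) * bbr m n tt i a j b r x)"
      unfolding Wbr_apply[of _ _ _ X]
      by (intro sum.cong refl) (simp add: K1[OF ch l])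
    show ?thesis by (simp add: A B sum.distrib)
  qed
  finally show "(Wbr m n tt (hh m n tt l) (Wbr m n tt X Z) r x :: 'a) =
     (Wbr m n tt (Wbr m n tt (hh m n tt l) X) Z + Wbr m n tt X (Wbr m n tt (hh m n tt l) Z)) r x" .
qed

end


context
  fixes m n :: nat and tt :: "nat \<Rightarrow> nat"
  assumes em: "even m" and en: "even n" and tpos: "\<forall>j\<in>Y0 m. tt j > 0"
begin

lemma eigen:
  assumes ch: "CHAR('a::field) > 2" and l: "l \<in> Y m n"
    and X: "\<And>r x. (X :: 'a witt) r x \<noteq> 0 \<Longrightarrow> r \<in> Y m n \<and> x \<in> Vset TYPE('a) m n tt \<and> wt m n l r x = \<mu>"
  shows "Wbr m n tt (hh m n tt l) X = \<mu> \<cdot>w X"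
proof (rule ext, rule ext)
  fix r x
  show "Wbr m n tt (hh m n tt l) X r x = (\<mu> \<cdot>w X) r x"
    using X[of r x] by (cases "X r x = 0") (auto simp: K1[OF em en tpos ch l] wsmult_def)
qed

lemma hh_nz:
  assumes ch: "CHAR('a::field) > 2" and l: "l \<in> Y m n" and nz: "(hh m n tt l :: 'a witt) r x \<noteq> 0"
  shows "x = ix m r \<and> (r = l \<or> r = pr m n l)"
  using nz unfolding hh_formula[OF em en tpos ch l]
  by (auto simp: wsmult_def Eb_def ebas_def split: if_splits)

lemma hh_Wpar:
  assumes ch: "CHAR('a::field) > 2" and l: "l \<in> Y m n"
  shows "(hh m n tt l :: 'a witt) \<in> Wpar m 0"
  unfolding Wpar_def
proof (intro CollectI allI impI)
  fix r x assume "(hh m n tt l :: 'a witt) r x \<noteq> 0"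
  then have "x = ix m r" using hh_nz[OF ch l] by blast
  then show "(card (snd x) + tau m r) mod 2 = 0" by (auto simp: ix_def tau_def)
qed

lemma wt_ix: "wt m n l r (ix m r) = 0"
  by (simp add: wt_def Wt_ix)

lemma Wbr_hh_hh:
  assumes ch: "CHAR('a::field) > 2" and a: "a \<in> Y m n" and b: "b \<in> Y m n"
  shows "Wbr m n tt (hh m n tt a) (hh m n tt b) = (0 :: 'a witt)"
proof -
  have "Wbr m n tt (hh m n tt a) (hh m n tt b) = (0::'a) \<cdot>w (hh m n tt b :: 'a witt)"
  proof (rule eigen[OF ch a])
    fix r x assume nz: "(hh m n tt b :: 'a witt) r x \<noteq> 0"
    then have x: "x = ix m r" and r: "r = b \<or> r = pr m n b" using hh_nz[OF ch b] by blast+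
    have rY: "r \<in> Y m n" using r b pr_facts[OF em en b] by auto
    show "r \<in> Y m n \<and> x \<in> Vset TYPE('a) m n tt \<and> wt m n a r x = 0"
      using rY x ix_valid[OF ch tpos rY] wt_ix by auto
  qed
  then show ?thesis by (simp add: wsmult_def fun_eq_iff)
qed

lemma Wq_pair:
  assumes l: "l \<in> Y m n" and r: "r \<in> Y m n"
  shows "Wq m n l (pr m n r) + Wq m n l r = 0"
proof -
  have "pr m n r = pr m n l \<longleftrightarrow> r = l" using pr_facts(2)[OF em en l] pr_facts(2)[OF em en r] by metis
  moreover have "pr m n r = l \<longleftrightarrow> r = pr m n l" using pr_facts(2)[OF em en l] pr_facts(2)[OF em en r] by metis
  ultimately show ?thesis by (auto simp: Wq_def)
qed

lemma Eb_z0_eigen: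
  assumes ch: "CHAR('a::field) > 2" and l: "l \<in> Y m n" and j: "j \<in> Y m n"
  shows "Wbr m n tt (hh m n tt l) (Eb j z0) = wt m n l j z0 \<cdot>w (Eb j z0 :: 'a witt)"
  by (rule eigen[OF ch l]) (auto simp: Eb_def ebas_def j z0_valid split: if_splits)

lemma Eb_z0_Wpar: "(Eb j z0 :: 'a::field witt) \<in> Wpar m (tau m j)"
  by (auto simp: Wpar_def Eb_def ebas_def z0_def tau_def split: if_splits)

lemma DH_ebas_nz:
  assumes g: "g \<in> Vset TYPE('a::field) m n tt" and nz: "(DH m n tt (ebas g) :: 'a witt) r x \<noteq> 0"
  shows "r \<in> Y m n \<and> (Dbas m (pr m n r) g x :: 'a) \<noteq> 0"
  using nz by (auto simp: DH_ebas[OF g] lsmult_def split: if_splits)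

lemma DH_ebas_eigen:
  assumes ch: "CHAR('a::field) > 2" and l: "l \<in> Y m n" and g: "g \<in> Vset TYPE('a) m n tt"
  shows "Wbr m n tt (hh m n tt l) (DH m n tt (ebas g)) = of_int (sig m l * Wt m n l g) \<cdot>w (DH m n tt (ebas g) :: 'a witt)"
proof (rule eigen[OF ch l])
  fix r x assume nz: "(DH m n tt (ebas g) :: 'a witt) r x \<noteq> 0"
  then have r: "r \<in> Y m n" and D: "(Dbas m (pr m n r) g x :: 'a) \<noteq> 0" using DH_ebas_nz[OF g] by blast+
  have xv: "x \<in> Vset TYPE('a) m n tt" using Dbas_supp[OF g D] .
  have "\<And>t. int (Nc t x) = int (Nc t g) - (if t = pr m n r then 1 else 0)" using Nc_Dbas[OF D] by blast
  then have "Wt m n l x = Wt m n l g - Wq m n l (pr m n r)" by (simp add: Wt_def Wq_def)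
  then have "Wt m n l x - Wq m n l r = Wt m n l g" using Wq_pair[OF l r] by simp
  then show "r \<in> Y m n \<and> x \<in> Vset TYPE('a) m n tt \<and> wt m n l r x = of_int (sig m l * Wt m n l g)"
    using r xv by (simp add: wt_def)
qed

lemma DH_ebas_Wpar:
  assumes g: "g \<in> Vset TYPE('a::field) m n tt"
  shows "(DH m n tt (ebas g) :: 'a witt) \<in> Wpar m (card (snd g) mod 2)"
  unfolding Wpar_def
proof (intro CollectI allI impI)
  fix r x assume nz: "(DH m n tt (ebas g) :: 'a witt) r x \<noteq> 0"
  then have r: "r \<in> Y m n" and D: "(Dbas m (pr m n r) g x :: 'a) \<noteq> 0" using DH_ebas_nz[OF g] by blast+
  have pr0: "(pr m n r \<in> Y0 m) = (r \<in> Y0 m)" using pr_facts[OF em en r] by auto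
  have fin: "finite (snd g)" using g by (auto simp: Vset_def valid_idx_def Y1_def intro: finite_subset)
  from Dbas_nz[OF D] show "(card (snd x) + tau m r) mod 2 = card (snd g) mod 2"
  proof
    assume "pr m n r \<in> Y0 m \<and> fst g (pr m n r) \<noteq> 0 \<and> x = ((fst g)(pr m n r := fst g (pr m n r) - 1), snd g)"
    then show ?thesis using pr0 by (auto simp: tau_def)
  next
    assume A: "pr m n r \<notin> Y0 m \<and> pr m n r \<in> snd g \<and> x = (fst g, snd g - {pr m n r})"
    have "card (snd g - {pr m n r}) + 1 = card (snd g)" using A fin by (metis card_Suc_Diff1 Suc_eq_plus1)
    then have "card (snd x) + 1 = card (snd g)" using A by simp
    then show ?thesis using A pr0 by (auto simp: tau_def)
  qed
qed

end


lemma lspan_single: "w \<in> S \<Longrightarrow> c \<cdot>w w \<in> lspan S"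
  unfolding lspan_def by (rule CollectI, rule exI[of _ "{w}"], rule exI[of _ "\<lambda>_. c"]) auto

lemma one_wsmult: "(1::'a::field) \<cdot>w w = w"
  by (simp add: wsmult_def)

lemma lspan_mem: "w \<in> S \<Longrightarrow> (w :: 'a::field witt) \<in> lspan S"
  using lspan_single[of w S 1] by (simp add: one_wsmult)

lemma wsmult_sum: "c \<cdot>w (\<Sum>v\<in>F. g v) = (\<Sum>v\<in>F. c \<cdot>w (g v :: 'a::field witt))"
  by (induction F rule: infinite_finite_induct) (simp_all add: wsmult_def fun_eq_iff distrib_left sum_fun_app)

lemma wsmult_wsmult: "a \<cdot>w (b \<cdot>w w) = (a * b) \<cdot>w (w :: 'a::field witt)"
  by (simp add: wsmult_def mult.assoc)

lemma lspan_smult: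
  assumes "v \<in> lspan S" shows "c \<cdot>w v \<in> lspan S"
proof -
  from assms obtain F cc where F: "finite F" "F \<subseteq> S" "v = (\<Sum>u\<in>F. cc u \<cdot>w u)" by (auto simp: lspan_def)
  then have "c \<cdot>w v = (\<Sum>u\<in>F. (c * cc u) \<cdot>w u)" by (simp add: wsmult_sum wsmult_wsmult)
  then show ?thesis using F unfolding lspan_def
    by (intro CollectI exI[of _ F] exI[of _ "\<lambda>u. c * cc u"]) simp
qed

lemma DH_ebas_Hbar:
  assumes "g \<in> Vset TYPE('a::field) m n tt"
  shows "(DH m n tt (ebas g) :: 'a witt) \<in> Hbar m n tt"
proof -
  have "(ebas g :: 'a lam) \<in> Lam m n tt" using assms by (auto simp: Lam_def ebas_def Vset_def)
  moreover have "homogL (ebas g :: 'a lam)" unfolding homogL_def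
    by (rule exI[of _ "card (snd g) mod 2"]) (auto simp: ebas_def)
  ultimately have "(DH m n tt (ebas g) :: 'a witt) \<in> {DH m n tt f | f. f \<in> Lam m n tt \<and> homogL f}" by blast
  then show ?thesis unfolding Hbar_def by (rule lspan_mem)
qed

lemma Wbr_Hset: "x \<in> Hbar m n tt \<Longrightarrow> y \<in> Hbar m n tt \<Longrightarrow> (Wbr m n tt x y :: 'a::field witt) \<in> Hset m n tt"
proof -
  assume "x \<in> Hbar m n tt" "y \<in> Hbar m n tt"
  then have "(Wbr m n tt x y :: 'a witt) \<in> {Wbr m n tt x y | x y. x \<in> Hbar m n tt \<and> y \<in> Hbar m n tt}" by blast
  then show ?thesis unfolding Hset_def by (rule lspan_mem)
qed

lemma Hset_smult: "x \<in> Hset m n tt \<Longrightarrow> c \<cdot>w x \<in> Hset m n tt"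
  unfolding Hset_def by (rule lspan_smult)

lemma Hbar_smult: "x \<in> Hbar m n tt \<Longrightarrow> c \<cdot>w x \<in> Hbar m n tt"
  unfolding Hbar_def by (rule lspan_smult)

lemma kap_nz:
  assumes "even m" "even n" "i \<in> Y m n"
  shows "(kap m n g i :: 'a::field) \<noteq> 0"
proof -
  have "sig m (pr m n i) = 1 \<or> sig m (pr m n i) = -1" using pr_facts(7)[OF assms(1,2) pr_facts(1)[OF assms]] by blast
  then show ?thesis by (auto simp: kap_def)
qed

context
  fixes m n :: nat and tt :: "nat \<Rightarrow> nat"
  assumes em: "even m" and en: "even n" and tpos: "\<forall>j\<in>Y0 m. tt j > 0"
begin

lemma DH_ix:
  assumes ch: "CHAR('a::field) > 2" and q: "q \<in> Y m n"
  shows "(DH m n tt (ebas (ix m q)) :: 'a witt) = kap m n (ix m q) (pr m n q) \<cdot>w Eb (pr m n q) z0"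
proof (rule ext)
  fix i
  have qv: "ix m q \<in> Vset TYPE('a) m n tt" using ix_valid[OF ch tpos q] .
  have pq: "pr m n q \<in> Y m n" "pr m n (pr m n q) = q" using pr_facts[OF em en q] by auto
  show "(DH m n tt (ebas (ix m q)) :: 'a witt) i = (kap m n (ix m q) (pr m n q) \<cdot>w Eb (pr m n q) z0) i"
  proof (cases "i \<in> Y m n")
    case True
    have "pr m n i = q \<longleftrightarrow> i = pr m n q" using pr_facts(2)[OF em en True] pq by metis
    then show ?thesis using True
      by (auto simp: DH_ebas[OF qv] Dbas_ix Eb_def wsmult_def lsmult_def fun_eq_iff)
  next
    case False
    then show ?thesis using pq
      by (auto simp: DH_ebas[OF qv] Eb_def wsmult_def fun_eq_iff)
  qed
qed

lemma Eb_z0_Hbar: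
  assumes ch: "CHAR('a::field) > 2" and j: "j \<in> Y m n"
  shows "(Eb j z0 :: 'a witt) \<in> Hbar m n tt"
proof -
  let ?q = "pr m n j"
  have q: "?q \<in> Y m n" "pr m n ?q = j" using pr_facts[OF em en j] by auto
  have k: "(kap m n (ix m ?q) j :: 'a) \<noteq> 0" using kap_nz[OF em en j] .
  have "(DH m n tt (ebas (ix m ?q)) :: 'a witt) = kap m n (ix m ?q) j \<cdot>w Eb j z0"
    using DH_ix[OF ch q(1)] q(2) by simp
  then have "(Eb j z0 :: 'a witt) = inverse (kap m n (ix m ?q) j) \<cdot>w DH m n tt (ebas (ix m ?q))"
    using k by (simp add: wsmult_wsmult one_wsmult)
  moreover have "(DH m n tt (ebas (ix m ?q)) :: 'a witt) \<in> Hbar m n tt"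
    using DH_ebas_Hbar ix_valid[OF ch tpos q(1)] by blast
  ultimately show ?thesis using Hbar_smult by metis
qed

lemma wt_jj:
  assumes j: "j \<in> Y m n"
  shows "(wt m n j j z0 :: 'a::field) = of_int (sig m j)"
  using pr_facts(3)[OF em en j] by (simp add: wt_def Wt_z0 Wq_def)

lemma sig_nz: "j \<in> Y m n \<Longrightarrow> (of_int (sig m j) :: 'a::field) \<noteq> 0"
  using pr_facts(7)[OF em en] by fastforce

lemma Eb_z0_Hset:
  assumes ch: "CHAR('a::field) > 2" and j: "j \<in> Y m n"
  shows "(Eb j z0 :: 'a witt) \<in> Hset m n tt"
proof -
  have hb: "(hh m n tt j :: 'a witt) \<in> Hbar m n tt"
  proof -
    have "(Lmult m n tt (xg m j) (xg m (pr m n j)) :: 'a lam) = lsmult (eps m n j) (ebas (g2 m n j))"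
      by (rule Lmult_xg[OF em en tpos ch j])
    moreover have "eps m n j \<noteq> (0::'a)" by (simp add: eps_def)
    ultimately have "(hh m n tt j :: 'a witt) = eps m n j \<cdot>w DH m n tt (ebas (g2 m n j))"
      unfolding hh_def[OF em en tpos] by (simp add: DH_lsmult)
    then show ?thesis using Hbar_smult DH_ebas_Hbar g2_valid[OF em en tpos ch j] by metis
  qed
  have e: "Wbr m n tt (hh m n tt j) (Eb j z0) = of_int (sig m j) \<cdot>w (Eb j z0 :: 'a witt)"
    using Eb_z0_eigen[OF em en tpos ch j j] wt_jj[OF j, where 'a='a] by simp
  have "(Eb j z0 :: 'a witt) = Wbr m n tt (hh m n tt j) (inverse (of_int (sig m j)) \<cdot>w Eb j z0)"
    unfolding Wbr_smult_right e using sig_nz[OF j, where 'a='a] by (simp add: wsmult_wsmult one_wsmult)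
  then show ?thesis using Wbr_Hset[OF hb Hbar_smult[OF Eb_z0_Hbar[OF ch j]]] by metis
qed

end


definition raise :: "nat \<Rightarrow> idx \<Rightarrow> idx" where
  "raise j g = ((fst g)(j := Suc (fst g j)), snd g)"

lemma raise_valid:
  assumes "g \<in> Vset TYPE('a::field) m n tt" "j \<in> Y0 m" "Suc (fst g j) \<le> piv TYPE('a) tt j"
  shows "raise j g \<in> Vset TYPE('a) m n tt"
  using assms by (auto simp: raise_def Vset_def valid_idx_def)

lemma Dop_Dbas_raise:
  assumes j: "j \<in> Y0 m" and g: "g \<in> Vset TYPE('a::field) m n tt" and gp: "raise j g \<in> Vset TYPE('a) m n tt"
  shows "(Dop m n tt j (Dbas m q (raise j g)) :: 'a lam) = Dbas m q g"
proof (cases "q \<in> Y0 m")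
  case True
  show ?thesis
  proof (cases "q = j")
    case True
    have e: "((fst (raise j g))(j := fst (raise j g) j - 1), snd (raise j g)) = g"
      by (simp add: raise_def)
    show ?thesis using True \<open>q \<in> Y0 m\<close> by (simp add: Dbas_def e Dop_ebas[OF g] raise_def)
  next
    case False
    show ?thesis
    proof (cases "fst g q = 0")
      case True
      then show ?thesis using False \<open>q \<in> Y0 m\<close> by (simp add: Dbas_def raise_def Dop_zero)
    next
      case nz: False
      let ?y = "((fst (raise j g))(q := fst g q - 1), snd g)"
      have D: "(Dbas m q (raise j g) :: 'a lam) = ebas ?y"
        using nz False \<open>q \<in> Y0 m\<close> by (simp add: Dbas_def raise_def)
      have yv: "?y \<in> Vset TYPE('a) m n tt"
      proof -
        have "(Dbas m q (raise j g) ?y :: 'a) \<noteq> 0" using D by (simp add: ebas_def)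
        then show ?thesis using Dbas_supp[OF gp] by blast
      qed
      have e: "((fst ?y)(j := fst ?y j - 1), snd ?y) = ((fst g)(q := fst g q - 1), snd g)"
        using False by (auto simp: raise_def fun_eq_iff)
      have fj: "fst ?y j \<noteq> 0" using False by (simp add: raise_def)
      show ?thesis unfolding D Dop_ebas[OF yv] using j fj e nz \<open>q \<in> Y0 m\<close>
        by (simp add: Dbas_def)
    qed
  qed
next
  case False
  show ?thesis
  proof (cases "q \<in> snd g")
    case False
    then show ?thesis using \<open>q \<notin> Y0 m\<close> by (simp add: Dbas_def raise_def Dop_zero)
  next
    case True
    let ?y = "(fst (raise j g), snd g - {q})"
    let ?s = "(-1::'a) ^ card {i \<in> snd g. i < q}"
    have D: "(Dbas m q (raise j g) :: 'a lam) = lsmult ?s (ebas ?y)"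
      using True \<open>q \<notin> Y0 m\<close> by (simp add: Dbas_def raise_def)
    have yv: "?y \<in> Vset TYPE('a) m n tt" using gp by (auto simp: Vset_def valid_idx_def raise_def)
    have e: "((fst ?y)(j := fst ?y j - 1), snd ?y) = (fst g, snd g - {q})"
      by (auto simp: raise_def fun_eq_iff)
    have fj: "fst ?y j \<noteq> 0" by (simp add: raise_def)
    show ?thesis unfolding D Dop_lsmult Dop_ebas[OF yv] using j fj e True \<open>q \<notin> Y0 m\<close>
      by (simp add: Dbas_def)
  qed
qed

lemma kap_raise: "kap m n (raise j g) i = kap m n g i"
  by (simp add: kap_def raise_def)

lemma raise_Wbr:
  assumes j: "j \<in> Y0 m" and g: "g \<in> Vset TYPE('a::field) m n tt" and gp: "raise j g \<in> Vset TYPE('a) m n tt"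
  shows "Wbr m n tt (Eb j z0) (DH m n tt (ebas (raise j g))) = (DH m n tt (ebas g) :: 'a witt)"
proof (rule ext, rule ext)
  fix r x
  have jY: "j \<in> Y m n" using j by (rule Y0_sub)
  show "Wbr m n tt (Eb j z0) (DH m n tt (ebas (raise j g))) r x = (DH m n tt (ebas g) :: 'a witt) r x"
    unfolding Wbr_Eb_z0[OF jY]
    by (simp add: DH_ebas[OF gp] DH_ebas[OF g] Dop_lsmult Dop_Dbas_raise[OF j g gp] kap_raise)
qed

context
  fixes m n :: nat and tt :: "nat \<Rightarrow> nat"
  assumes em: "even m" and en: "even n" and tpos: "\<forall>j\<in>Y0 m. tt j > 0" and m2: "m \<ge> 2"
begin

lemma hh_Hset:
  assumes ch: "CHAR('a::field) > 2" and l: "l \<in> Y m n"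
  shows "(hh m n tt l :: 'a witt) \<in> Hset m n tt"
proof -
  let ?g = "g2 m n l"
  let ?j = "if l \<in> Y0 m then l else 1"
  have j: "?j \<in> Y0 m" using m2 by (auto simp: Y0_def)
  have gv: "?g \<in> Vset TYPE('a) m n tt" using g2_valid[OF em en tpos ch l] .
  have pf: "pr m n l \<noteq> l" "(pr m n l \<in> Y0 m) = (l \<in> Y0 m)" using pr_facts[OF em en l] by auto
  have "fst ?g ?j \<le> 1" using pf by (auto simp: g2_def)
  moreover have "piv TYPE('a) tt ?j \<ge> 2" using piv_ge2[OF ch] tpos j by blast
  ultimately have gp: "raise ?j ?g \<in> Vset TYPE('a) m n tt" using raise_valid[OF gv j] by simp
  have "(hh m n tt l :: 'a witt) = eps m n l \<cdot>w DH m n tt (ebas ?g)"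
  proof -
    have "(Lmult m n tt (xg m l) (xg m (pr m n l)) :: 'a lam) = lsmult (eps m n l) (ebas ?g)"
      by (rule Lmult_xg[OF em en tpos ch l])
    moreover have "eps m n l \<noteq> (0::'a)" by (simp add: eps_def)
    ultimately show ?thesis unfolding hh_def[OF em en tpos] by (simp add: DH_lsmult)
  qed
  also have "\<dots> = Wbr m n tt (eps m n l \<cdot>w Eb ?j z0) (DH m n tt (ebas (raise ?j ?g)))"
    by (simp add: Wbr_smult_left raise_Wbr[OF j gv gp])
  finally have e: "(hh m n tt l :: 'a witt) = Wbr m n tt (eps m n l \<cdot>w Eb ?j z0) (DH m n tt (ebas (raise ?j ?g)))" .
  have "(Eb ?j z0 :: 'a witt) \<in> Hbar m n tt" using Eb_z0_Hbar[OF em en tpos ch Y0_sub[OF j]] .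
  then show ?thesis unfolding e by (intro Wbr_Hset Hbar_smult DH_ebas_Hbar gp)
qed

end


lemma witt_cong: "X1 = X2 \<Longrightarrow> X1 r x = X2 r x" by simp

lemma wsmult_zero_w: "(0::'a::field) \<cdot>w w = 0"
  by (simp add: wsmult_def fun_eq_iff)

lemma witt_self_neg:
  assumes two: "(2::'a::field) \<noteq> 0" and e: "(X :: 'a witt) = - X"
  shows "X = 0"
proof (rule ext, rule ext)
  fix r x
  have "X r x = - X r x" using e by (metis uminus_apply)
  then have "2 * X r x = 0" by (simp add: algebra_simps)
  then show "X r x = 0 r x" using two by simp
qed

lemma Dop_lower_even:
  assumes t: "t \<in> Y0 m" and x: "x \<in> Vset TYPE('a::field) m n tt" and nz: "fst x t \<noteq> 0"
  shows "(Dop m n tt t f ((fst x)(t := fst x t - 1), snd x) :: 'a) = f x"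
proof -
  let ?y = "((fst x)(t := fst x t - 1), snd x)"
  have "f b * (Dbas m t b ?y :: 'a) = (if x = b then f b else 0)" if b: "b \<in> Vset TYPE('a) m n tt" for b
  proof (cases "b = x")
    case True then show ?thesis using t nz by (simp add: Dbas_def ebas_def)
  next
    case False
    have "(Dbas m t b ?y :: 'a) = 0"
    proof (rule ccontr)
      assume "(Dbas m t b ?y :: 'a) \<noteq> 0"
      then have bt: "fst b t \<noteq> 0" and e: "((fst b)(t := fst b t - 1), snd b) = ?y"
        using t by (auto simp: Dbas_def ebas_def split: if_splits)
      have e1: "(fst b)(t := fst b t - 1) = (fst x)(t := fst x t - 1)" using e by simp
      have "fst b = fst x"
      proof
        fix s show "fst b s = fst x s"
        proof (cases "s = t")
          case True
          have "fst b t - 1 = fst x t - 1" using fun_cong[OF e1, of t] by simp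
          then show ?thesis using True bt nz by simp
        next
          case False
          then show ?thesis using fun_cong[OF e1, of s] by simp
        qed
      qed
      then have "b = x" using e by (simp add: prod_eq_iff)
      then show False using False by simp
    qed
    then show ?thesis using False by auto
  qed
  then have "(Dop m n tt t f ?y :: 'a) = (\<Sum>b\<in>Vset TYPE('a) m n tt. if x = b then f b else 0)"
    unfolding Dop_def by (intro sum.cong) auto
  also have "\<dots> = f x" using x by (simp add: sum.delta' finite_Vset)
  finally show ?thesis .
qed

lemma Dop_lower_odd:
  assumes t: "t \<notin> Y0 m" and x: "x \<in> Vset TYPE('a::field) m n tt" and tin: "t \<in> snd x"
  shows "(Dop m n tt t f (fst x, snd x - {t}) :: 'a) = (-1) ^ card {j \<in> snd x. j < t} * f x"
proof -
  let ?y = "(fst x, snd x - {t})"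
  let ?s = "(-1::'a) ^ card {j \<in> snd x. j < t}"
  have "f b * (Dbas m t b ?y :: 'a) = (if x = b then ?s * f b else 0)" if b: "b \<in> Vset TYPE('a) m n tt" for b
  proof (cases "b = x")
    case True then show ?thesis using t tin by (simp add: Dbas_def ebas_def lsmult_def)
  next
    case False
    have "(Dbas m t b ?y :: 'a) = 0"
    proof (rule ccontr)
      assume "(Dbas m t b ?y :: 'a) \<noteq> 0"
      then have bt: "t \<in> snd b" and e: "(fst b, snd b - {t}) = ?y"
        using t by (auto simp: Dbas_def ebas_def lsmult_def split: if_splits)
      have "snd b = snd x" using e bt tin by blast
      then have "b = x" using e by (simp add: prod_eq_iff)
      then show False using False by simp
    qed
    then show ?thesis using False by auto
  qed
  then have "(Dop m n tt t f ?y :: 'a) = (\<Sum>b\<in>Vset TYPE('a) m n tt. if x = b then ?s * f b else 0)"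
    unfolding Dop_def by (intro sum.cong) auto
  also have "\<dots> = ?s * f x" using x by (simp add: sum.delta' finite_Vset)
  finally show ?thesis .
qed

lemma vanish:
  assumes em: "even m" and en: "even n" and tpos: "\<forall>j\<in>Y0 m. tt j > 0"
    and cl: "cleanW m n tt (X :: 'a::field witt)"
    and D: "\<And>j r x. j \<in> Y m n \<Longrightarrow> r \<in> Y m n \<Longrightarrow> Dop m n tt j (X r) x = 0"
    and W: "\<And>c r x. c \<in> Y m n \<Longrightarrow> r \<in> Y m n \<Longrightarrow> x \<in> Vset TYPE('a) m n tt \<Longrightarrow> wt m n c r x * X r x = 0"
  shows "X = 0"
proof (rule ext, rule ext)
  fix r x
  show "X r x = 0 r x"
  proof (cases "r \<in> Y m n \<and> x \<in> Vset TYPE('a) m n tt")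
    case False
    moreover have "X r x \<noteq> 0 \<Longrightarrow> r \<in> Y m n \<and> x \<in> Vset TYPE('a) m n tt" using cl unfolding cleanW_def by blast
    ultimately show ?thesis by auto
  next
    case True
    then have r: "r \<in> Y m n" and xv: "x \<in> Vset TYPE('a) m n tt" by auto
    have val: "valid_idx TYPE('a) m n tt x" using xv by (simp add: Vset_def)
    show ?thesis
    proof (cases "x = z0")
      case True
      have "wt m n r r z0 * X r z0 = 0" using W[OF r r] z0_valid by blast
      moreover have "(wt m n r r z0 :: 'a) \<noteq> 0"
        using wt_jj[OF em en tpos r, where 'a='a] sig_nz[OF em en tpos r, where 'a='a] by simp
      ultimately show ?thesis using True by simp
    next
      case False
      show ?thesis
      proof (cases "\<exists>t. fst x t \<noteq> 0")
        case True
        then obtain t where nz: "fst x t \<noteq> 0" by blast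
        then have t: "t \<in> Y0 m" using val by (auto simp: valid_idx_def)
        have "Dop m n tt t (X r) ((fst x)(t := fst x t - 1), snd x) = X r x"
          by (rule Dop_lower_even[OF t xv nz])
        then show ?thesis using D[OF Y0_sub[OF t] r] by simp
      next
        case False
        then have "fst x = (\<lambda>j. 0)" by auto
        then have "snd x \<noteq> {}" using \<open>x \<noteq> z0\<close> by (auto simp: z0_def prod_eq_iff)
        then obtain t where tin: "t \<in> snd x" by blast
        then have t1: "t \<in> Y1 m n" using val by (auto simp: valid_idx_def)
        have tY: "t \<in> Y m n" using t1 by (auto simp: Y1_def Y_def)
        have "Dop m n tt t (X r) (fst x, snd x - {t}) = (-1) ^ card {j \<in> snd x. j < t} * X r x"
          by (rule Dop_lower_odd[OF Y1_notY0[OF t1] xv tin])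
        then show ?thesis using D[OF tY r] by simp
      qed
    qed
  qed
qed

context
  fixes m n :: nat and tt :: "nat \<Rightarrow> nat" and d :: nat and \<phi> :: "'a::field witt \<Rightarrow> 'a witt \<Rightarrow> 'a witt"
  assumes em: "even m" and en: "even n" and tpos: "\<forall>j\<in>Y0 m. tt j > 0" and m2: "m \<ge> 2"
    and ch: "CHAR('a) > 2"
    and sb: "super_biderivation m n tt d \<phi>"
begin

lemma two_nz: "(2::'a) \<noteq> 0"
proof
  assume "(2::'a) = 0"
  then have "(of_nat 2 :: 'a) = 0" by simp
  then have "CHAR('a) dvd 2" by (simp only: of_nat_eq_0_iff_char_dvd)
  then show False using ch by (simp add: nat_dvd_not_less)
qed

lemma d2: "d < 2" using sb by (simp add: super_biderivation_def)

lemma clos: "x \<in> Hset m n tt \<Longrightarrow> y \<in> Hset m n tt \<Longrightarrow> \<phi> x y \<in> Hset m n tt"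
  using sb by (simp add: super_biderivation_def)

lemma lin2: "x \<in> Hset m n tt \<Longrightarrow> y \<in> Hset m n tt \<Longrightarrow> \<phi> x (c \<cdot>w y) = c \<cdot>w \<phi> x y"
  using sb by (simp add: super_biderivation_def)

lemma par: "a < 2 \<Longrightarrow> b < 2 \<Longrightarrow> x \<in> Hpar m n tt a \<Longrightarrow> y \<in> Hpar m n tt b \<Longrightarrow>
    \<phi> x y \<in> Hpar m n tt ((a + b + d) mod 2)"
  using sb unfolding super_biderivation_def by blast

lemma der: "a < 2 \<Longrightarrow> b < 2 \<Longrightarrow> c < 2 \<Longrightarrow> x \<in> Hpar m n tt a \<Longrightarrow> y \<in> Hpar m n tt b \<Longrightarrow> z \<in> Hpar m n tt c \<Longrightarrow>
    \<phi> x (Wbr m n tt y z) = Wbr m n tt (\<phi> x y) z + ((-1) ^ ((d + a) * b)) \<cdot>w Wbr m n tt y (\<phi> x z)"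
  using sb unfolding super_biderivation_def by blast

lemma skw: "a < 2 \<Longrightarrow> b < 2 \<Longrightarrow> x \<in> Hpar m n tt a \<Longrightarrow> y \<in> Hpar m n tt b \<Longrightarrow>
    \<phi> x y = - (((-1) ^ (d * a + d * b + a * b)) \<cdot>w \<phi> y x)"
  using sb unfolding super_biderivation_def by blast

lemma phi_zero: "x \<in> Hset m n tt \<Longrightarrow> (y :: 'a witt) \<in> Hset m n tt \<Longrightarrow> \<phi> x 0 = 0"
  using lin2[of x y 0] by (simp add: wsmult_zero_w)

abbreviation "h l \<equiv> (hh m n tt l :: 'a witt)"

lemma hP: "l \<in> Y m n \<Longrightarrow> h l \<in> Hpar m n tt 0"
  using hh_Hset[OF em en tpos m2 ch] hh_Wpar[OF em en tpos ch] by (simp add: Hpar_def)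

lemma EP: "j \<in> Y m n \<Longrightarrow> (Eb j z0 :: 'a witt) \<in> Hpar m n tt (tau m j)"
  using Eb_z0_Hset[OF em en tpos ch] Eb_z0_Wpar[OF em en tpos] by (simp add: Hpar_def)

lemma tau2: "tau m j < 2" by (simp add: tau_def)

lemma HparD: "x \<in> Hpar m n tt a \<Longrightarrow> x \<in> Hset m n tt" "x \<in> Hpar m n tt a \<Longrightarrow> x \<in> Wpar m a"
  by (auto simp: Hpar_def)

abbreviation "z a b \<equiv> \<phi> (h a) (h b)"

lemma zP: "a \<in> Y m n \<Longrightarrow> b \<in> Y m n \<Longrightarrow> z a b \<in> Hpar m n tt (d mod 2)"
  using par[OF _ _ hP hP] by simp

lemma z_anti: "a \<in> Y m n \<Longrightarrow> b \<in> Y m n \<Longrightarrow> z b a = - z a b"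
  using skw[OF _ _ hP[of b] hP[of a]] by (simp add: one_wsmult)

lemma z_diag: "a \<in> Y m n \<Longrightarrow> z a a = 0"
  using z_anti[of a a] witt_self_neg[OF two_nz] by blast

lemma skew_h:
  assumes "l \<in> Y m n" "X \<in> Wpar m p"
  shows "Wbr m n tt X (h l) = - Wbr m n tt (h l) X"
  using Wbr_skew[OF assms(2) HparD(2)[OF hP[OF assms(1)]]] by (simp add: one_wsmult)

text \<open>Step 1: the torus acts trivially on z a b.\<close>

abbreviation "Q a b c \<equiv> Wbr m n tt (h c) (z a b)"

lemma Q_sym:
  assumes a: "a \<in> Y m n" and b: "b \<in> Y m n" and c: "c \<in> Y m n"
  shows "Q a b c = Q a c b"
proof -
  have "\<phi> (h a) (Wbr m n tt (h c) (h b)) = Wbr m n tt (z a c) (h b) + Q a b c"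
    using der[OF _ _ _ hP[OF a] hP[OF c] hP[OF b]] by (simp add: one_wsmult)
  moreover have "Wbr m n tt (h c) (h b) = 0" by (rule Wbr_hh_hh[OF em en tpos ch c b])
  moreover have "\<phi> (h a) 0 = 0" using phi_zero HparD(1)[OF hP[OF a]] by blast
  moreover have "Wbr m n tt (z a c) (h b) = - Q a c b"
    using skew_h[OF b HparD(2)[OF zP[OF a c]]] .
  ultimately show ?thesis by (metis add.inverse_inverse add.right_inverse neg_eq_iff_add_eq_0 add.commute)
qed

lemma Q_anti:
  assumes a: "a \<in> Y m n" and b: "b \<in> Y m n" and c: "c \<in> Y m n"
  shows "Q b a c = - Q a b c"
  using z_anti[OF a b] by (simp add: Wbr_uminus_right)

lemma Q_zero:
  assumes a: "a \<in> Y m n" and b: "b \<in> Y m n" and c: "c \<in> Y m n"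
  shows "Q a b c = 0"
proof -
  have "Q a b c = - Q b a c" using Q_anti[OF b a c] .
  also have "\<dots> = - Q b c a" using Q_sym[OF b a c] by simp
  also have "\<dots> = Q c b a" using Q_anti[OF b c a] by simp
  also have "\<dots> = Q c a b" using Q_sym[OF c b a] by simp
  also have "\<dots> = - Q a c b" using Q_anti[OF c a b] by simp
  also have "\<dots> = - Q a b c" using Q_sym[OF a b c] by simp
  finally show ?thesis using witt_self_neg[OF two_nz] by blast
qed


abbreviation "e j \<equiv> (Eb j z0 :: 'a witt)"
abbreviation "mu j c \<equiv> (wt m n c j z0 :: 'a)"
abbreviation "P j a \<equiv> \<phi> (h a) (e j)"
abbreviation "Z j a b \<equiv> Wbr m n tt (z a b) (e j)"

lemma eHset: "j \<in> Y m n \<Longrightarrow> e j \<in> Hset m n tt" using HparD(1)[OF EP] .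

lemma PP: "j \<in> Y m n \<Longrightarrow> a \<in> Y m n \<Longrightarrow> P j a \<in> Wpar m ((tau m j + d) mod 2)"
  using HparD(2)[OF par[OF _ tau2 hP EP]] by simp

lemma E1:
  assumes j: "j \<in> Y m n" and a: "a \<in> Y m n" and b: "b \<in> Y m n"
  shows "mu j b * P j a r x = Z j a b r x + Wbr m n tt (h b) (P j a) r x"
proof -
  have "\<phi> (h a) (Wbr m n tt (h b) (e j)) = Z j a b + Wbr m n tt (h b) (P j a)"
    using der[OF _ _ tau2 hP[OF a] hP[OF b] EP[OF j]] by (simp add: one_wsmult)
  moreover have "Wbr m n tt (h b) (e j) = mu j b \<cdot>w e j" by (rule Eb_z0_eigen[OF em en tpos ch b j])
  moreover have "\<phi> (h a) (mu j b \<cdot>w e j) = mu j b \<cdot>w P j a"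
    by (rule lin2[OF HparD(1)[OF hP[OF a]] eHset[OF j]])
  ultimately have "mu j b \<cdot>w P j a = Z j a b + Wbr m n tt (h b) (P j a)" by simp
  from witt_cong[OF this, of r x] show ?thesis by (simp add: wsmult_def)
qed

lemma E2:
  assumes j: "j \<in> Y m n" and a: "a \<in> Y m n" and b: "b \<in> Y m n"
  shows "Wbr m n tt (h b) (P j a) r x = Wbr m n tt (h a) (P j b) r x"
proof -
  let ?s = "(-1::'a) ^ (d * tau m j)"
  have s: "?s \<noteq> 0" by simp
  have sk: "\<phi> (e j) (h c) = - (?s \<cdot>w P j c)" if c: "c \<in> Y m n" for c
    using skw[OF tau2 _ EP[OF j] hP[OF c]] by simp
  have "\<phi> (e j) (Wbr m n tt (h b) (h a)) = Wbr m n tt (\<phi> (e j) (h b)) (h a) + Wbr m n tt (h b) (\<phi> (e j) (h a))"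
    using der[OF tau2 _ _ EP[OF j] hP[OF b] hP[OF a]] by (simp add: one_wsmult)
  moreover have "Wbr m n tt (h b) (h a) = 0" by (rule Wbr_hh_hh[OF em en tpos ch b a])
  moreover have "\<phi> (e j) 0 = 0" using phi_zero eHset[OF j] by blast
  ultimately have "0 = Wbr m n tt (- (?s \<cdot>w P j b)) (h a) + Wbr m n tt (h b) (- (?s \<cdot>w P j a))"
    using sk[OF a] sk[OF b] by simp
  also have "\<dots> = ?s \<cdot>w Wbr m n tt (h a) (P j b) - ?s \<cdot>w Wbr m n tt (h b) (P j a)"
    by (simp only: Wbr_uminus_left Wbr_uminus_right Wbr_smult_left Wbr_smult_right skew_h[OF a PP[OF j b]])
       (simp add: wsmult_def fun_eq_iff)
  finally have W: "0 = ?s \<cdot>w Wbr m n tt (h a) (P j b) - ?s \<cdot>w Wbr m n tt (h b) (P j a)" .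
  have "0 = ?s * Wbr m n tt (h a) (P j b) r x - ?s * Wbr m n tt (h b) (P j a) r x"
    using witt_cong[OF W, of r x] by (simp add: wsmult_def)
  then have "?s * (Wbr m n tt (h a) (P j b) r x - Wbr m n tt (h b) (P j a) r x) = 0"
    by (simp add: algebra_simps)
  then show ?thesis using s by simp
qed

lemma Z_anti: "j \<in> Y m n \<Longrightarrow> a \<in> Y m n \<Longrightarrow> b \<in> Y m n \<Longrightarrow> Z j b a r x = - Z j a b r x"
  using z_anti[of a b] by (simp add: Wbr_uminus_left)

lemma E3:
  assumes j: "j \<in> Y m n" and a: "a \<in> Y m n" and b: "b \<in> Y m n"
  shows "mu j b * P j a r x - mu j a * P j b r x = 2 * Z j a b r x"
  using E1[OF j a b, of r x] E1[OF j b a, of r x] E2[OF j a b, of r x] Z_anti[OF j a b, of r x]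
  by (simp add: algebra_simps)

lemma E3w:
  assumes j: "j \<in> Y m n" and a: "a \<in> Y m n" and b: "b \<in> Y m n"
  shows "mu j b \<cdot>w P j a - mu j a \<cdot>w P j b = 2 \<cdot>w Z j a b"
  using E3[OF j a b] by (auto simp: fun_eq_iff wsmult_def)

lemma hZ:
  assumes j: "j \<in> Y m n" and a: "a \<in> Y m n" and b: "b \<in> Y m n" and c: "c \<in> Y m n"
  shows "Wbr m n tt (h c) (Z j a b) = mu j c \<cdot>w Z j a b"
proof -
  have "Wbr m n tt (h c) (Z j a b) = Wbr m n tt (Q a b c) (e j) + Wbr m n tt (z a b) (Wbr m n tt (h c) (e j))"
    by (rule ad_deriv[OF em en tpos ch c])
  also have "\<dots> = mu j c \<cdot>w Z j a b"
    by (simp add: Q_zero[OF a b c] Wbr_zero_left Eb_z0_eigen[OF em en tpos ch c j] Wbr_smult_right)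
  finally show ?thesis .
qed

lemma R:
  assumes j: "j \<in> Y m n" and a: "a \<in> Y m n" and b: "b \<in> Y m n" and c: "c \<in> Y m n"
  shows "mu j a * Z j b c r x = mu j b * Z j a c r x"
proof -
  have "Wbr m n tt (h c) (mu j b \<cdot>w P j a - mu j a \<cdot>w P j b) = Wbr m n tt (h c) (2 \<cdot>w Z j a b)"
    using E3w[OF j a b] by simp
  then have "mu j b \<cdot>w Wbr m n tt (h c) (P j a) - mu j a \<cdot>w Wbr m n tt (h c) (P j b) = 2 \<cdot>w (mu j c \<cdot>w Z j a b)"
    by (simp add: Wbr_diff_right Wbr_smult_right hZ[OF j a b c])
  from witt_cong[OF this, of r x]
  have "mu j b * Wbr m n tt (h c) (P j a) r x - mu j a * Wbr m n tt (h c) (P j b) r x = 2 * (mu j c * Z j a b r x)"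
    by (simp add: wsmult_def)
  moreover have "Wbr m n tt (h c) (P j a) r x = mu j c * P j a r x - Z j a c r x" using E1[OF j a c, of r x] by simp
  moreover have "Wbr m n tt (h c) (P j b) r x = mu j c * P j b r x - Z j b c r x" using E1[OF j b c, of r x] by simp
  ultimately have "mu j b * (mu j c * P j a r x - Z j a c r x) - mu j a * (mu j c * P j b r x - Z j b c r x) =
      2 * (mu j c * Z j a b r x)" by simp
  moreover have "mu j b * P j a r x - mu j a * P j b r x = 2 * Z j a b r x" by (rule E3[OF j a b])
  ultimately show ?thesis by algebra
qed


lemma Z_zero:
  assumes j: "j \<in> Y m n" and a: "a \<in> Y m n" and c: "c \<in> Y m n"
  shows "Z j a c r x = 0"
proof -
  have muj: "mu j j \<noteq> 0" using wt_jj[OF em en tpos j, where 'a='a] sig_nz[OF em en tpos j, where 'a='a] by simp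
  have Zd: "Z j q q r x = 0" if q: "q \<in> Y m n" for q
    using z_diag[OF q] by (simp add: Wbr_zero_left)
  have Zjc: "Z j j c r x = 0"
  proof (cases "mu j c = 0")
    case False
    have "mu j c * Z j j c r x = mu j j * Z j c c r x" by (rule R[OF j c j c])
    then show ?thesis using Zd[OF c] False by simp
  next
    case True
    have "mu j j * Z j c j r x = mu j c * Z j j j r x" by (rule R[OF j j c j])
    then have "Z j c j r x = 0" using True muj by simp
    then show ?thesis using Z_anti[OF j c j, of r x] by simp
  qed
  have "mu j j * Z j a c r x = mu j a * Z j j c r x" by (rule R[OF j j a c])
  then show ?thesis using Zjc muj by simp
qed

lemma z_zero:
  assumes a: "a \<in> Y m n" and b: "b \<in> Y m n"
  shows "z a b = 0"
proof (rule vanish[OF em en tpos])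
  show "cleanW m n tt (z a b)" using Hset_clean HparD(1)[OF zP[OF a b]] by blast
next
  fix j r x assume j: "j \<in> Y m n" and r: "r \<in> Y m n"
  have "Wbr m n tt (z a b) (e j) = 0" using Z_zero[OF j a b] by (auto simp: fun_eq_iff)
  then have "Wbr m n tt (e j) (z a b) = 0"
    using Wbr_skew[OF Eb_z0_Wpar[OF em en tpos] HparD(2)[OF zP[OF a b]], of n tt]
    by (simp add: wsmult_def fun_eq_iff)
  then have "Wbr m n tt (e j) (z a b) r x = 0" by simp
  then show "Dop m n tt j (z a b r) x = 0" using Wbr_Eb_z0[OF j, where 'a='a and tt=tt and X="z a b" and r=r and x=x] r by simp
next
  fix c r x assume c: "c \<in> Y m n" and r: "r \<in> Y m n" and xv: "x \<in> Vset TYPE('a) m n tt"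
  have "Wbr m n tt (h c) (z a b) r x = 0" using Q_zero[OF a b c] by simp
  then show "wt m n c r x * z a b r x = 0" using K1[OF em en tpos ch c] r xv by simp
qed


lemma final:
  assumes i: "i \<in> Y m n" and g: "valid_idx TYPE('a) m n tt (al, u)"
    and eH: "(DH m n tt (ebas (al, u)) :: 'a witt) \<in> Hset m n tt"
  shows "\<phi> (DH m n tt (Lmult m n tt (xg m i) (xg m (pr m n i)))) (DH m n tt (ebas (al, u)))
      \<in> weight_space m n tt al u"
proof -
  let ?E = "(DH m n tt (ebas (al, u)) :: 'a witt)"
  have gv: "(al, u) \<in> Vset TYPE('a) m n tt" using g by (simp add: Vset_def)
  have EP: "?E \<in> Hpar m n tt (card u mod 2)"
    using eH DH_ebas_Wpar[OF em en tpos gv] by (simp add: Hpar_def)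
  have hd: "\<And>l. DH m n tt (Lmult m n tt (xg m l) (xg m (pr m n l))) = h l"
    by (simp add: hh_def[OF em en tpos])
  have "Wbr m n tt (h l) (\<phi> (h i) ?E) =
      of_int (sig m l * (int (al (pr m n l)) - int (al l) + (if pr m n l \<in> u then 1 else 0) - (if l \<in> u then 1 else 0))) \<cdot>w \<phi> (h i) ?E"
    if l: "l \<in> Y m n" for l
  proof -
    let ?mu = "(of_int (sig m l * Wt m n l (al, u)) :: 'a)"
    have "\<phi> (h i) (Wbr m n tt (h l) ?E) = Wbr m n tt (z i l) ?E + Wbr m n tt (h l) (\<phi> (h i) ?E)"
      using der[OF _ _ _ hP[OF i] hP[OF l] EP] by (simp add: one_wsmult)
    moreover have "Wbr m n tt (h l) ?E = ?mu \<cdot>w ?E" by (rule DH_ebas_eigen[OF em en tpos ch l gv])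
    moreover have "\<phi> (h i) (?mu \<cdot>w ?E) = ?mu \<cdot>w \<phi> (h i) ?E"
      by (rule lin2[OF HparD(1)[OF hP[OF i]] eH])
    moreover have "z i l = 0" by (rule z_zero[OF i l])
    ultimately have "Wbr m n tt (h l) (\<phi> (h i) ?E) = ?mu \<cdot>w \<phi> (h i) ?E"
      by (simp add: Wbr_zero_left)
    moreover have "Wt m n l (al, u) = int (al (pr m n l)) - int (al l) + (if pr m n l \<in> u then 1 else 0) - (if l \<in> u then 1 else 0)"
      by (simp add: Wt_def Nc_def)
    ultimately show ?thesis by simp
  qed
  moreover have "\<phi> (h i) ?E \<in> Hset m n tt" by (rule clos[OF HparD(1)[OF hP[OF i]] eH])
  ultimately show ?thesis unfolding weight_space_def hd by blast
qed

end

theorem lemma4p2: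
  fixes \<phi> :: "('a::alg_closed_field) witt \<Rightarrow> 'a witt \<Rightarrow> 'a witt"
    and m n d i :: nat and tt :: "nat \<Rightarrow> nat" and al :: "nat \<Rightarrow> nat" and u :: "nat set"
  assumes "prime CHAR('a)" and "CHAR('a) > 2"
    and "even m" and "even n" and "m \<ge> 2" and "n \<ge> 2"
    and "\<forall>j\<in>Y0 m. tt j > 0"
    and "super_biderivation m n tt d \<phi>"
    and "i \<in> Y m n"
    and "valid_idx TYPE('a) m n tt (al, u)"
    and "DH m n tt (ebas (al, u) :: 'a lam) \<in> Hset m n tt"
  shows "\<phi> (DH m n tt (Lmult m n tt (xg m i) (xg m (pr m n i))))
            (DH m n tt (ebas (al, u))) \<in> weight_space m n tt al u"
  by (rule final[OF assms(3) assms(4) assms(7) assms(5) assms(2) assms(8) assms(9) assms(10) assms(11)])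

end
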